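(* Let $(\mu^{(n)})$ be an almost-Berger sequence with regularity index $\mathrm{reg}(\mu^{(n)})\ge2$. Then for every integer $k\ge1$ there exists a constant $L_k>0$ such that $$|\mathrm{Rm}^k(\mu^{(n)})|_{\rm st}\le L_k\Big((\varepsilon^{(n)})^{1/2}+(\varepsilon^{(n)})^{-\frac{k+2}{2}}|\lambda_1^{(n)}-\lambda_2^{(n)}|\Big)\quad\text{for all }n\in\mathbb N.$$
   Context: Let $X_0=\begin{pmatrix}i&0\\0&-i\end{pmatrix}$, $X_1=\begin{pmatrix}0&-1\\1&0\end{pmatrix}$, $X_2=\begin{pmatrix}0&i\\i&0\end{pmatrix}$, a basis of $\mathfrak{su}(2)$ with $[X_0,X_1]=-2X_2$, $[X_0,X_2]=2X_1$, $[X_1,X_2]=-2X_0$. For $\varepsilon,\lambda_1,\lambda_2>0$ let $g$ be the left-invariant metric on $\mathsf{SU}(2)$ with $X_0,X_1,X_2$ pairwise orthogonal and $g(X_0,X_0)=\varepsilon$, $g(X_1,X_1)=\lambda_1$, $g(X_2,X_2)=\lambda_2$; identify the orthonormal basis $X_0/\sqrt\varepsilon,X_1/\sqrt{\lambda_1},X_2/\sqrt{\lambda_2}$ with the standard basis $(e_0,e_1,e_2)$ of $\mathbb R^3$, and let $\mu$ be the corresponding bracket on $\mathbb R^3$. With curvature convention $\mathrm{Rm}(X\wedge Y)=\nabla_{[X,Y]}-[\nabla_X,\nabla_Y]$, $\mathrm{Rm}^k(\mu):\bigotimes^k\mathbb R^3\otimes\Lambda^2\mathbb R^3\to\mathfrak{so}(3)$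 is the $k$-th covariant derivative of the curvature operator of $g$ at $e$ expressed in this basis, and $|\cdot|_{\rm st}$ is the standard Euclidean norm. An almost-Berger sequence is a sequence $(\mu^{(n)})$ of such brackets, with parameters $(\varepsilon^{(n)},\lambda_1^{(n)},\lambda_2^{(n)})$, such that $\varepsilon^{(n)}\to0$, $\lambda_i^{(n)}\to1$, and $|\lambda_1^{(n)}-\lambda_2^{(n)}|\le C\varepsilon^{(n)}$ for some $C>0$ and all $n$. Its regularity index is $\mathrm{reg}(\mu^{(n)})=\sup\{k\in\mathbb Z:(\varepsilon^{(n)})^{-k/2}|\lambda_1^{(n)}-\lambda_2^{(n)}|\to0\}\in\{1,2,\dots\}\cup\{+\infty\}$. *)

theory Defs
  imports "HOL-Analysis.Analysis"
begin

text \<open>Indices 0,1,2 stand for the basis elements X0,X1,X2 of su(2), resp. for the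
orthonormal basis e0,e1,e2 of R^3.  Structure constants of su(2) in the basis X0,X1,X2:
[X_i,X_j] = sum_l suc i j l X_l, from [X0,X1]=-2X2, [X0,X2]=2X1, [X1,X2]=-2X0.\<close>

definition su2_const :: "nat \<Rightarrow> nat \<Rightarrow> nat \<Rightarrow> real" where
  "su2_const i j l =
     (if (i,j,l) = (0,1,2) then -2 else if (i,j,l) = (1,0,2) then 2
      else if (i,j,l) = (0,2,1) then 2 else if (i,j,l) = (2,0,1) then -2
      else if (i,j,l) = (1,2,0) then -2 else if (i,j,l) = (2,1,0) then 2
      else 0)"

text \<open>Squared lengths g(X_i,X_i).\<close>
definition metric_diag :: "real \<Rightarrow> real \<Rightarrow> real \<Rightarrow> nat \<Rightarrow> real" where
  "metric_diag eps l1 l2 i = (if i = 0 then eps else if i = 1 then l1 else l2)"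

text \<open>The bracket mu on R^3 obtained by identifying X_i / sqrt(g_i) with e_i:
mu(e_i,e_j) = sum_l (mu_const i j l) e_l.\<close>
definition mu_const :: "real \<Rightarrow> real \<Rightarrow> real \<Rightarrow> nat \<Rightarrow> nat \<Rightarrow> nat \<Rightarrow> real" where
  "mu_const eps l1 l2 i j l =
     su2_const i j l * sqrt (metric_diag eps l1 l2 l)
       / (sqrt (metric_diag eps l1 l2 i) * sqrt (metric_diag eps l1 l2 j))"

text \<open>Levi-Civita connection of the metric Lie algebra (R^3, c, standard inner product)
(Koszul formula for left-invariant fields): LC c w a p = < nabla_{e_w} e_a , e_p >.\<close>
definition LC :: "(nat \<Rightarrow> nat \<Rightarrow> nat \<Rightarrow> real) \<Rightarrow> nat \<Rightarrow> nat \<Rightarrow> nat \<Rightarrow> real" where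
  "LC c w a p = (c w a p - c a p w + c p w a) / 2"

text \<open>Matrix of the endomorphism nabla_{e_w}: entry (m,l) = < nabla_{e_w} e_l , e_m >.\<close>
definition nablaM :: "(nat \<Rightarrow> nat \<Rightarrow> nat \<Rightarrow> real) \<Rightarrow> nat \<Rightarrow> nat \<Rightarrow> nat \<Rightarrow> real" where
  "nablaM c w m l = LC c w l m"

text \<open>Curvature operator Rm(e_i \<and> e_j) = nabla_{[e_i,e_j]} - [nabla_{e_i}, nabla_{e_j}],
as a matrix: entry (m,l) = < Rm(e_i \<and> e_j) e_l , e_m >.\<close>
definition Rm0 :: "(nat \<Rightarrow> nat \<Rightarrow> nat \<Rightarrow> real) \<Rightarrow> nat \<Rightarrow> nat \<Rightarrow> nat \<Rightarrow> nat \<Rightarrow> real" where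
  "Rm0 c i j m l =
     (\<Sum>p<3. c i j p * nablaM c p m l)
     - (\<Sum>q<3. nablaM c i m q * nablaM c j q l - nablaM c j m q * nablaM c i q l)"

text \<open>A left-invariant tensor of type (tensor^k R^3) (x) Lambda^2 R^3 -> so(3) is given by
its components T ws i j m l = < T(e_ws ; e_i \<and> e_j) e_l , e_m >, ws a list of k indices.\<close>
fun cov_der :: "(nat \<Rightarrow> nat \<Rightarrow> nat \<Rightarrow> real)
     \<Rightarrow> (nat list \<Rightarrow> nat \<Rightarrow> nat \<Rightarrow> nat \<Rightarrow> nat \<Rightarrow> real)
     \<Rightarrow> (nat list \<Rightarrow> nat \<Rightarrow> nat \<Rightarrow> nat \<Rightarrow> nat \<Rightarrow> real)" where
  "cov_der c T [] i j m l = 0"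
| "cov_der c T (w # vs) i j m l =
     (\<Sum>q<3. nablaM c w m q * T vs i j q l - T vs i j m q * nablaM c w q l)
     - (\<Sum>a<length vs. \<Sum>p<3. LC c w (vs ! a) p * T (vs[a := p]) i j m l)
     - (\<Sum>p<3. LC c w i p * T vs p j m l + LC c w j p * T vs i p m l)"

definition RmK :: "(nat \<Rightarrow> nat \<Rightarrow> nat \<Rightarrow> real) \<Rightarrow> nat
     \<Rightarrow> nat list \<Rightarrow> nat \<Rightarrow> nat \<Rightarrow> nat \<Rightarrow> nat \<Rightarrow> real" where
  "RmK c k = (cov_der c ^^ k) (\<lambda>ws. Rm0 c)"

definition RmK_norm :: "(nat \<Rightarrow> nat \<Rightarrow> nat \<Rightarrow> real) \<Rightarrow> nat \<Rightarrow> real" where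
  "RmK_norm c k = sqrt (\<Sum>ws\<in>{ws. length ws = k \<and> set ws \<subseteq> {..<3}}.
      \<Sum>i<3. \<Sum>j<3. \<Sum>m<3. \<Sum>l<3. (RmK c k ws i j m l)\<^sup>2)"

definition almost_Berger :: "(nat \<Rightarrow> real) \<Rightarrow> (nat \<Rightarrow> real) \<Rightarrow> (nat \<Rightarrow> real) \<Rightarrow> bool" where
  "almost_Berger eps l1 l2 \<longleftrightarrow>
     (\<forall>n. eps n > 0 \<and> l1 n > 0 \<and> l2 n > 0) \<and>
     eps \<longlonglongrightarrow> 0 \<and> l1 \<longlonglongrightarrow> 1 \<and> l2 \<longlonglongrightarrow> 1 \<and>
     (\<exists>C>0. \<forall>n. \<bar>l1 n - l2 n\<bar> \<le> C * eps n)"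

definition reg_index :: "(nat \<Rightarrow> real) \<Rightarrow> (nat \<Rightarrow> real) \<Rightarrow> (nat \<Rightarrow> real) \<Rightarrow> ereal" where
  "reg_index eps l1 l2 = Sup {ereal (real_of_int k) | k.
      (\<lambda>n. eps n powr (- real_of_int k / 2) * \<bar>l1 n - l2 n\<bar>) \<longlonglongrightarrow> 0}"

end

theory Submission
  imports Defs
begin


definition Sop :: "(nat \<Rightarrow> nat \<Rightarrow> real) \<Rightarrow> (nat list \<Rightarrow> real) \<Rightarrow> nat list \<Rightarrow> real" where
"Sop A F xs = (\<Sum>a<length xs. \<Sum>p<3. A p (xs!a) * F (xs[a:=p]))"

lemma sum_diag:
  fixes f :: "nat \<Rightarrow> real" and g :: "nat \<Rightarrow> nat \<Rightarrow> real"
  shows "(\<Sum>b<n. \<Sum>a<n. (if a = b then f b else g b a)) = (\<Sum>b<n. f b) + (\<Sum>b<n. \<Sum>a<n. if a = b then 0 else g b a)"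
proof -
  have e: "(if a = b then f b else g b a) = (if a = b then f b else 0) + (if a = b then 0 else g b a)" for a b
    by simp
  have d: "(\<Sum>a<n. if a = b then f b else 0) = f b" if "b < n" for b
    using that by (simp add: sum.delta)
  have "(\<Sum>b<n. \<Sum>a<n. (if a = b then f b else g b a)) = (\<Sum>b<n. (\<Sum>a<n. (if a = b then f b else 0)) + (\<Sum>a<n. if a = b then 0 else g b a))"
    by (simp only: e sum.distrib)
  also have "\<dots> = (\<Sum>b<n. f b + (\<Sum>a<n. if a = b then 0 else g b a))"
    by (rule sum.cong[OF refl]) (simp add: d)
  also have "\<dots> = (\<Sum>b<n. f b) + (\<Sum>b<n. \<Sum>a<n. if a = b then 0 else g b a)"
    by (simp add: sum.distrib)
  finally show ?thesis .
qed

lemma Sop_expand: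
  "Sop B (Sop A F) xs = (\<Sum>b<length xs. \<Sum>a<length xs. if a = b then
       (\<Sum>p<3. (\<Sum>r<3. A p r * B r (xs!b)) * F (xs[b:=p]))
     else (\<Sum>r<3. \<Sum>p<3. B r (xs!b) * A p (xs!a) * F ((xs[b:=r])[a:=p])))"
proof -
  have "Sop B (Sop A F) xs = (\<Sum>b<length xs. \<Sum>r<3. \<Sum>a<length xs. \<Sum>p<3.
      B r (xs!b) * A p (xs[b:=r]!a) * F ((xs[b:=r])[a:=p]))"
    by (simp add: Sop_def sum_distrib_left mult.assoc)
  also have "\<dots> = (\<Sum>b<length xs. \<Sum>a<length xs. \<Sum>r<3. \<Sum>p<3.
      B r (xs!b) * A p (xs[b:=r]!a) * F ((xs[b:=r])[a:=p]))"
    by (rule sum.cong[OF refl], rule sum.swap)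
  also have "... = (\<Sum>b<length xs. \<Sum>a<length xs. if a = b then (\<Sum>p<3. (\<Sum>r<3. A p r * B r (xs!b)) * F (xs[b:=p])) else (\<Sum>r<3. \<Sum>p<3. B r (xs!b) * A p (xs!a) * F ((xs[b:=r])[a:=p])))"
  proof (intro sum.cong refl)
    fix b a assume b: "b \<in> {..<length xs}" and a: "a \<in> {..<length xs}"
    show "(\<Sum>r<3. \<Sum>p<3. B r (xs!b) * A p (xs[b:=r]!a) * F ((xs[b:=r])[a:=p])) = (if a = b then (\<Sum>p<3. (\<Sum>r<3. A p r * B r (xs!b)) * F (xs[b:=p])) else (\<Sum>r<3. \<Sum>p<3. B r (xs!b) * A p (xs!a) * F ((xs[b:=r])[a:=p])))"
    proof (cases "a = b")
      case True
      have "(\<Sum>r<3. \<Sum>p<3. B r (xs!b) * A p (xs[b:=r]!a) * F ((xs[b:=r])[a:=p])) = (\<Sum>r<3::nat. \<Sum>p<3::nat. A p r * B r (xs!b) * F (xs[b:=p]))"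
        using b True by (intro sum.cong refl) (simp add: mult_ac)
      also have "\<dots> = (\<Sum>p<3::nat. \<Sum>r<3::nat. A p r * B r (xs!b) * F (xs[b:=p]))"
        by (rule sum.swap)
      finally show ?thesis using True by (simp add: sum_distrib_right)
    next
      case False
      then show ?thesis by simp
    qed
  qed
  finally show ?thesis .
qed

lemma Sop_comm:
  "Sop B (Sop A F) xs = Sop A (Sop B F) xs + Sop (\<lambda>p q. (\<Sum>r<3. A p r * B r q) - (\<Sum>r<3. B p r * A r q)) F xs"
proof -
  define n where "n = length xs"
  define O1 where "O1 b a = (\<Sum>r<3::nat. \<Sum>p<3::nat. B r (xs!b) * A p (xs!a) * F ((xs[b:=r])[a:=p]))" for b a
  define O2 where "O2 b a = (\<Sum>r<3::nat. \<Sum>p<3::nat. A r (xs!b) * B p (xs!a) * F ((xs[b:=r])[a:=p]))" for b a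
  define D1 where "D1 b = (\<Sum>p<3::nat. (\<Sum>r<3. A p r * B r (xs!b)) * F (xs[b:=p]))" for b
  define D2 where "D2 b = (\<Sum>p<3::nat. (\<Sum>r<3. B p r * A r (xs!b)) * F (xs[b:=p]))" for b
  have L: "Sop B (Sop A F) xs = (\<Sum>b<n. D1 b) + (\<Sum>b<n. \<Sum>a<n. if a = b then 0 else O1 b a)"
    unfolding Sop_expand n_def D1_def O1_def by (rule sum_diag)
  have R: "Sop A (Sop B F) xs = (\<Sum>b<n. D2 b) + (\<Sum>b<n. \<Sum>a<n. if a = b then 0 else O2 b a)"
    unfolding Sop_expand n_def D2_def O2_def by (rule sum_diag)
  have C: "Sop (\<lambda>p q. (\<Sum>r<3. A p r * B r q) - (\<Sum>r<3. B p r * A r q)) F xs = (\<Sum>b<n. D1 b) - (\<Sum>b<n. D2 b)"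
    unfolding Sop_def n_def D1_def D2_def
    by (simp add: sum_subtractf left_diff_distrib)
  have sw: "O1 a b = O2 b a" if "a \<noteq> b" for a b
  proof -
    have "O1 a b = (\<Sum>p<3::nat. \<Sum>r<3::nat. B r (xs!a) * A p (xs!b) * F ((xs[a:=r])[b:=p]))"
      unfolding O1_def by (rule sum.swap)
    also have "\<dots> = O2 b a"
      unfolding O2_def using that by (intro sum.cong refl) (simp add: list_update_swap mult_ac)
    finally show ?thesis .
  qed
  have "(\<Sum>b<n. \<Sum>a<n. if a = b then 0 else O2 b a) = (\<Sum>a<n. \<Sum>b<n. if a = b then 0 else O2 b a)"
    by (rule sum.swap)
  also have "\<dots> = (\<Sum>a<n. \<Sum>b<n. if b = a then 0 else O1 a b)"
    by (intro sum.cong refl) (auto simp: sw)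
  finally have "(\<Sum>b<n. \<Sum>a<n. if a = b then 0 else O2 b a) = (\<Sum>a<n. \<Sum>b<n. if b = a then 0 else O1 a b)" .
  then show ?thesis using L R C by simp
qed

definition Flat :: "(nat list \<Rightarrow> nat \<Rightarrow> nat \<Rightarrow> nat \<Rightarrow> nat \<Rightarrow> real) \<Rightarrow> nat list \<Rightarrow> real" where
"Flat T xs = T (take (length xs - 4) xs) (xs!(length xs - 4)) (xs!(length xs - 3)) (xs!(length xs - 2)) (xs!(length xs - 1))"

lemma Flat_app: "Flat T (vs @ [i,j,m,l]) = T vs i j m l"
  by (simp add: Flat_def nth_append)

lemma LC_skew:
  assumes "\<And>a b l. c a b l = - c b a l"
  shows "LC c w a p = - LC c w p a"
  using assms[of w p a] assms[of p a w] assms[of a w p] unfolding LC_def by (simp add: field_simps)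

lemma Sop_app4:
  "Sop A F (vs @ [i,j,m,l]) = (\<Sum>a<length vs. \<Sum>p<3. A p (vs!a) * F (vs[a:=p] @ [i,j,m,l]))
    + (\<Sum>p<3. A p i * F (vs @ [p,j,m,l])) + (\<Sum>p<3. A p j * F (vs @ [i,p,m,l]))
    + (\<Sum>p<3. A p m * F (vs @ [i,j,p,l])) + (\<Sum>p<3. A p l * F (vs @ [i,j,m,p]))"
proof -
  have "length (vs @ [i,j,m,l]) = Suc (Suc (Suc (Suc (length vs))))" by simp
  then show ?thesis unfolding Sop_def
    by (simp only: sum.lessThan_Suc) (simp add: nth_append list_update_append)
qed

lemma cov_Sop:
  assumes skew: "\<And>a b l. c a b l = - c b a l"
  shows "cov_der c T (w#vs) i j m l = - Sop (nablaM c w) (Flat T) (vs @ [i,j,m,l])"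
proof -
  define N where "N = nablaM c w"
  have sk: "N p q = - N q p" for p q
    unfolding N_def nablaM_def by (rule LC_skew[OF skew])
  have e1: "(\<Sum>q<3. N m q * T vs i j q l - T vs i j m q * N q l) = - (\<Sum>p<3. N p m * T vs i j p l) - (\<Sum>p<3. N p l * T vs i j m p)"
  proof -
    have "(\<Sum>q<3. N m q * T vs i j q l) = - (\<Sum>p<3. N p m * T vs i j p l)"
      by (subst sk) (simp add: sum_negf)
    then show ?thesis by (simp add: sum_subtractf mult.commute)
  qed
  have e2: "(\<Sum>p<3. LC c w i p * T vs p j m l + LC c w j p * T vs i p m l) = (\<Sum>p<3. N p i * T vs p j m l) + (\<Sum>p<3. N p j * T vs i p m l)"
    by (simp add: sum.distrib N_def nablaM_def)
  have e3: "(\<Sum>a<length vs. \<Sum>p<3. LC c w (vs!a) p * T (vs[a:=p]) i j m l) = (\<Sum>a<length vs. \<Sum>p<3. N p (vs!a) * T (vs[a:=p]) i j m l)"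
    by (simp add: N_def nablaM_def)
  have "cov_der c T (w#vs) i j m l = (\<Sum>q<3. N m q * T vs i j q l - T vs i j m q * N q l)
     - (\<Sum>a<length vs. \<Sum>p<3. LC c w (vs!a) p * T (vs[a:=p]) i j m l)
     - (\<Sum>p<3. LC c w i p * T vs p j m l + LC c w j p * T vs i p m l)"
    by (simp add: N_def)
  also have "\<dots> = - Sop N (Flat T) (vs @ [i,j,m,l])"
    unfolding e1 e2 e3 Sop_app4 Flat_app by simp
  finally show ?thesis unfolding N_def .
qed


definition br :: "real \<Rightarrow> real \<Rightarrow> real \<Rightarrow> nat \<Rightarrow> nat \<Rightarrow> nat \<Rightarrow> real" where
"br x y z i j l = (if (i,j,l)=(1,2,0) then x else if (i,j,l)=(2,1,0) then -x
   else if (i,j,l)=(2,0,1) then y else if (i,j,l)=(0,2,1) then -y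
   else if (i,j,l)=(0,1,2) then z else if (i,j,l)=(1,0,2) then -z else 0)"

lemma LC_br: "LC (br x y z) w a p = (if (w,a,p) = (0,1,2) then (y+z-x)/2 else if (w,a,p)=(0,2,1) then (x-y-z)/2
  else if (w,a,p) = (1,0,2) then (y-z-x)/2 else if (w,a,p) = (1,2,0) then (x-y+z)/2
  else if (w,a,p) = (2,0,1) then (x+y-z)/2 else if (w,a,p) = (2,1,0) then (z-y-x)/2 else 0)"
  unfolding LC_def br_def by auto

definition Rtab :: "real \<Rightarrow> real \<Rightarrow> nat \<Rightarrow> nat \<Rightarrow> nat \<Rightarrow> nat \<Rightarrow> real" where
"Rtab x y i j m l = (if i = 0 \<or> j = 0 then - (x*x)/4 else 3*(x*x)/4 - x*y) *
   ((if i = m \<and> j = l then 1 else 0) - (if i = l \<and> j = m then 1 else 0))"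

lemma lt3: "(i::nat) < 3 \<Longrightarrow> i = 0 \<or> i = 1 \<or> i = 2" by auto

lemma Rm0_tab:
  assumes "i < 3" "j < 3" "m < 3" "l < 3"
  shows "Rm0 (br x y y) i j m l = Rtab x y i j m l"
  using lt3[OF assms(1)] lt3[OF assms(2)] lt3[OF assms(3)] lt3[OF assms(4)]
  by (elim disjE; simp add: Rm0_def nablaM_def LC_br numeral_3_eq_3 br_def Rtab_def field_simps)

lemma br_skew: "br x y z a b l = - br x y z b a l"
  by (simp add: br_def)

definition Jm :: "nat \<Rightarrow> nat \<Rightarrow> real" where
"Jm m l = (if m = 2 \<and> l = 1 then 1 else if m = 1 \<and> l = 2 then -1 else 0)"

lemma nab0: "nablaM (br x y z) 0 m l = ((y+z-x)/2) * Jm m l"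
  by (simp add: nablaM_def LC_br Jm_def)

definition FF :: "(nat \<Rightarrow> nat \<Rightarrow> nat \<Rightarrow> real) \<Rightarrow> nat \<Rightarrow> nat list \<Rightarrow> real" where
"FF c k = Flat (RmK c k)"

lemma Sop_Nil4: "Sop A F [i,j,m,l] = (\<Sum>p<3. A p i * F [p,j,m,l]) + (\<Sum>p<3. A p j * F [i,p,m,l])
    + (\<Sum>p<3. A p m * F [i,j,p,l]) + (\<Sum>p<3. A p l * F [i,j,m,p])"
  using Sop_app4[where vs="[]"] by simp

lemma FF0: "FF c 0 [i,j,m,l] = Rm0 c i j m l"
  using Flat_app[where vs="[]"] by (simp add: FF_def RmK_def)

lemma Sop_Cons: "Sop A F (w#xs) = (\<Sum>p<3. A p w * F (p#xs)) + Sop A (\<lambda>ys. F (w#ys)) xs"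
  unfolding Sop_def length_Cons sum.lessThan_Suc_shift by simp

lemma dec4: "4 \<le> length xs \<Longrightarrow> \<exists>vs i j m l. xs = vs @ [i,j,m,l]"
proof -
  assume a: "4 \<le> length xs"
  have g: "\<exists>i j m l. d = [i,j,m,l]" if "length d = 4" for d :: "'a list"
    using that by (auto simp: numeral_eq_Suc length_Suc_conv)
  have "length (drop (length xs - 4) xs) = 4" using a by simp
  from g[OF this] obtain i j m l where d: "drop (length xs - 4) xs = [i,j,m,l]"
    by blast
  have "xs = take (length xs - 4) xs @ drop (length xs - 4) xs" by simp
  then show ?thesis using d by metis
qed

lemma FF_Suc:
  assumes "\<And>a b l. c a b l = - c b a l" "4 \<le> length xs"
  shows "FF c (Suc k) (w#xs) = - Sop (nablaM c w) (FF c k) xs"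
proof -
  obtain vs i j m l where xs: "xs = vs @ [i,j,m,l]" using dec4[OF assms(2)] by blast
  have "FF c (Suc k) (w#xs) = RmK c (Suc k) (w#vs) i j m l"
    using Flat_app[of _ "w#vs"] by (simp add: FF_def xs)
  also have "\<dots> = cov_der c (RmK c k) (w#vs) i j m l"
    by (simp add: RmK_def)
  also have "\<dots> = - Sop (nablaM c w) (FF c k) xs"
    using cov_Sop[OF assms(1)] by (simp add: FF_def xs)
  finally show ?thesis .
qed


lemma Jinv_all:
  "\<forall>w<3. \<forall>q<3. \<forall>r<3. (\<Sum>p<3. Jm p w * nablaM (br x y y) p q r) + ((\<Sum>s<3. nablaM (br x y y) w q s * Jm s r) - (\<Sum>s<3. Jm q s * nablaM (br x y y) w s r)) = 0"
  by (simp add: numeral_3_eq_3 less_Suc_eq all_conj_distrib nablaM_def LC_br Jm_def field_simps)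

lemma bi_0000: "Sop Jm (FF (br x y y) 0) [0,0,0,0] = 0"
  by (simp add: Sop_Nil4 FF0 numeral_3_eq_3 Jm_def Rm0_tab Rtab_def)
lemma bi_0001: "Sop Jm (FF (br x y y) 0) [0,0,0,(Suc 0)] = 0"
  by (simp add: Sop_Nil4 FF0 numeral_3_eq_3 Jm_def Rm0_tab Rtab_def)
lemma bi_0002: "Sop Jm (FF (br x y y) 0) [0,0,0,(Suc (Suc 0))] = 0"
  by (simp add: Sop_Nil4 FF0 numeral_3_eq_3 Jm_def Rm0_tab Rtab_def)
lemma bi_0010: "Sop Jm (FF (br x y y) 0) [0,0,(Suc 0),0] = 0"
  by (simp add: Sop_Nil4 FF0 numeral_3_eq_3 Jm_def Rm0_tab Rtab_def)
lemma bi_0011: "Sop Jm (FF (br x y y) 0) [0,0,(Suc 0),(Suc 0)] = 0"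
  by (simp add: Sop_Nil4 FF0 numeral_3_eq_3 Jm_def Rm0_tab Rtab_def)
lemma bi_0012: "Sop Jm (FF (br x y y) 0) [0,0,(Suc 0),(Suc (Suc 0))] = 0"
  by (simp add: Sop_Nil4 FF0 numeral_3_eq_3 Jm_def Rm0_tab Rtab_def)
lemma bi_0020: "Sop Jm (FF (br x y y) 0) [0,0,(Suc (Suc 0)),0] = 0"
  by (simp add: Sop_Nil4 FF0 numeral_3_eq_3 Jm_def Rm0_tab Rtab_def)
lemma bi_0021: "Sop Jm (FF (br x y y) 0) [0,0,(Suc (Suc 0)),(Suc 0)] = 0"
  by (simp add: Sop_Nil4 FF0 numeral_3_eq_3 Jm_def Rm0_tab Rtab_def)
lemma bi_0022: "Sop Jm (FF (br x y y) 0) [0,0,(Suc (Suc 0)),(Suc (Suc 0))] = 0"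
  by (simp add: Sop_Nil4 FF0 numeral_3_eq_3 Jm_def Rm0_tab Rtab_def)
lemma bi_0100: "Sop Jm (FF (br x y y) 0) [0,(Suc 0),0,0] = 0"
  by (simp add: Sop_Nil4 FF0 numeral_3_eq_3 Jm_def Rm0_tab Rtab_def)
lemma bi_0101: "Sop Jm (FF (br x y y) 0) [0,(Suc 0),0,(Suc 0)] = 0"
  by (simp add: Sop_Nil4 FF0 numeral_3_eq_3 Jm_def Rm0_tab Rtab_def)
lemma bi_0102: "Sop Jm (FF (br x y y) 0) [0,(Suc 0),0,(Suc (Suc 0))] = 0"
  by (simp add: Sop_Nil4 FF0 numeral_3_eq_3 Jm_def Rm0_tab Rtab_def)
lemma bi_0110: "Sop Jm (FF (br x y y) 0) [0,(Suc 0),(Suc 0),0] = 0"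
  by (simp add: Sop_Nil4 FF0 numeral_3_eq_3 Jm_def Rm0_tab Rtab_def)
lemma bi_0111: "Sop Jm (FF (br x y y) 0) [0,(Suc 0),(Suc 0),(Suc 0)] = 0"
  by (simp add: Sop_Nil4 FF0 numeral_3_eq_3 Jm_def Rm0_tab Rtab_def)
lemma bi_0112: "Sop Jm (FF (br x y y) 0) [0,(Suc 0),(Suc 0),(Suc (Suc 0))] = 0"
  by (simp add: Sop_Nil4 FF0 numeral_3_eq_3 Jm_def Rm0_tab Rtab_def)
lemma bi_0120: "Sop Jm (FF (br x y y) 0) [0,(Suc 0),(Suc (Suc 0)),0] = 0"
  by (simp add: Sop_Nil4 FF0 numeral_3_eq_3 Jm_def Rm0_tab Rtab_def)
lemma bi_0121: "Sop Jm (FF (br x y y) 0) [0,(Suc 0),(Suc (Suc 0)),(Suc 0)] = 0"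
  by (simp add: Sop_Nil4 FF0 numeral_3_eq_3 Jm_def Rm0_tab Rtab_def)
lemma bi_0122: "Sop Jm (FF (br x y y) 0) [0,(Suc 0),(Suc (Suc 0)),(Suc (Suc 0))] = 0"
  by (simp add: Sop_Nil4 FF0 numeral_3_eq_3 Jm_def Rm0_tab Rtab_def)
lemma bi_0200: "Sop Jm (FF (br x y y) 0) [0,(Suc (Suc 0)),0,0] = 0"
  by (simp add: Sop_Nil4 FF0 numeral_3_eq_3 Jm_def Rm0_tab Rtab_def)
lemma bi_0201: "Sop Jm (FF (br x y y) 0) [0,(Suc (Suc 0)),0,(Suc 0)] = 0"
  by (simp add: Sop_Nil4 FF0 numeral_3_eq_3 Jm_def Rm0_tab Rtab_def)
lemma bi_0202: "Sop Jm (FF (br x y y) 0) [0,(Suc (Suc 0)),0,(Suc (Suc 0))] = 0"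
  by (simp add: Sop_Nil4 FF0 numeral_3_eq_3 Jm_def Rm0_tab Rtab_def)
lemma bi_0210: "Sop Jm (FF (br x y y) 0) [0,(Suc (Suc 0)),(Suc 0),0] = 0"
  by (simp add: Sop_Nil4 FF0 numeral_3_eq_3 Jm_def Rm0_tab Rtab_def)
lemma bi_0211: "Sop Jm (FF (br x y y) 0) [0,(Suc (Suc 0)),(Suc 0),(Suc 0)] = 0"
  by (simp add: Sop_Nil4 FF0 numeral_3_eq_3 Jm_def Rm0_tab Rtab_def)
lemma bi_0212: "Sop Jm (FF (br x y y) 0) [0,(Suc (Suc 0)),(Suc 0),(Suc (Suc 0))] = 0"
  by (simp add: Sop_Nil4 FF0 numeral_3_eq_3 Jm_def Rm0_tab Rtab_def)
lemma bi_0220: "Sop Jm (FF (br x y y) 0) [0,(Suc (Suc 0)),(Suc (Suc 0)),0] = 0"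
  by (simp add: Sop_Nil4 FF0 numeral_3_eq_3 Jm_def Rm0_tab Rtab_def)
lemma bi_0221: "Sop Jm (FF (br x y y) 0) [0,(Suc (Suc 0)),(Suc (Suc 0)),(Suc 0)] = 0"
  by (simp add: Sop_Nil4 FF0 numeral_3_eq_3 Jm_def Rm0_tab Rtab_def)
lemma bi_0222: "Sop Jm (FF (br x y y) 0) [0,(Suc (Suc 0)),(Suc (Suc 0)),(Suc (Suc 0))] = 0"
  by (simp add: Sop_Nil4 FF0 numeral_3_eq_3 Jm_def Rm0_tab Rtab_def)
lemma bi_1000: "Sop Jm (FF (br x y y) 0) [(Suc 0),0,0,0] = 0"
  by (simp add: Sop_Nil4 FF0 numeral_3_eq_3 Jm_def Rm0_tab Rtab_def)
lemma bi_1001: "Sop Jm (FF (br x y y) 0) [(Suc 0),0,0,(Suc 0)] = 0"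
  by (simp add: Sop_Nil4 FF0 numeral_3_eq_3 Jm_def Rm0_tab Rtab_def)
lemma bi_1002: "Sop Jm (FF (br x y y) 0) [(Suc 0),0,0,(Suc (Suc 0))] = 0"
  by (simp add: Sop_Nil4 FF0 numeral_3_eq_3 Jm_def Rm0_tab Rtab_def)
lemma bi_1010: "Sop Jm (FF (br x y y) 0) [(Suc 0),0,(Suc 0),0] = 0"
  by (simp add: Sop_Nil4 FF0 numeral_3_eq_3 Jm_def Rm0_tab Rtab_def)
lemma bi_1011: "Sop Jm (FF (br x y y) 0) [(Suc 0),0,(Suc 0),(Suc 0)] = 0"
  by (simp add: Sop_Nil4 FF0 numeral_3_eq_3 Jm_def Rm0_tab Rtab_def)
lemma bi_1012: "Sop Jm (FF (br x y y) 0) [(Suc 0),0,(Suc 0),(Suc (Suc 0))] = 0"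
  by (simp add: Sop_Nil4 FF0 numeral_3_eq_3 Jm_def Rm0_tab Rtab_def)
lemma bi_1020: "Sop Jm (FF (br x y y) 0) [(Suc 0),0,(Suc (Suc 0)),0] = 0"
  by (simp add: Sop_Nil4 FF0 numeral_3_eq_3 Jm_def Rm0_tab Rtab_def)
lemma bi_1021: "Sop Jm (FF (br x y y) 0) [(Suc 0),0,(Suc (Suc 0)),(Suc 0)] = 0"
  by (simp add: Sop_Nil4 FF0 numeral_3_eq_3 Jm_def Rm0_tab Rtab_def)
lemma bi_1022: "Sop Jm (FF (br x y y) 0) [(Suc 0),0,(Suc (Suc 0)),(Suc (Suc 0))] = 0"
  by (simp add: Sop_Nil4 FF0 numeral_3_eq_3 Jm_def Rm0_tab Rtab_def)
lemma bi_1100: "Sop Jm (FF (br x y y) 0) [(Suc 0),(Suc 0),0,0] = 0"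
  by (simp add: Sop_Nil4 FF0 numeral_3_eq_3 Jm_def Rm0_tab Rtab_def)
lemma bi_1101: "Sop Jm (FF (br x y y) 0) [(Suc 0),(Suc 0),0,(Suc 0)] = 0"
  by (simp add: Sop_Nil4 FF0 numeral_3_eq_3 Jm_def Rm0_tab Rtab_def)
lemma bi_1102: "Sop Jm (FF (br x y y) 0) [(Suc 0),(Suc 0),0,(Suc (Suc 0))] = 0"
  by (simp add: Sop_Nil4 FF0 numeral_3_eq_3 Jm_def Rm0_tab Rtab_def)
lemma bi_1110: "Sop Jm (FF (br x y y) 0) [(Suc 0),(Suc 0),(Suc 0),0] = 0"
  by (simp add: Sop_Nil4 FF0 numeral_3_eq_3 Jm_def Rm0_tab Rtab_def)
lemma bi_1111: "Sop Jm (FF (br x y y) 0) [(Suc 0),(Suc 0),(Suc 0),(Suc 0)] = 0"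
  by (simp add: Sop_Nil4 FF0 numeral_3_eq_3 Jm_def Rm0_tab Rtab_def)
lemma bi_1112: "Sop Jm (FF (br x y y) 0) [(Suc 0),(Suc 0),(Suc 0),(Suc (Suc 0))] = 0"
  by (simp add: Sop_Nil4 FF0 numeral_3_eq_3 Jm_def Rm0_tab Rtab_def)
lemma bi_1120: "Sop Jm (FF (br x y y) 0) [(Suc 0),(Suc 0),(Suc (Suc 0)),0] = 0"
  by (simp add: Sop_Nil4 FF0 numeral_3_eq_3 Jm_def Rm0_tab Rtab_def)
lemma bi_1121: "Sop Jm (FF (br x y y) 0) [(Suc 0),(Suc 0),(Suc (Suc 0)),(Suc 0)] = 0"
  by (simp add: Sop_Nil4 FF0 numeral_3_eq_3 Jm_def Rm0_tab Rtab_def)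
lemma bi_1122: "Sop Jm (FF (br x y y) 0) [(Suc 0),(Suc 0),(Suc (Suc 0)),(Suc (Suc 0))] = 0"
  by (simp add: Sop_Nil4 FF0 numeral_3_eq_3 Jm_def Rm0_tab Rtab_def)
lemma bi_1200: "Sop Jm (FF (br x y y) 0) [(Suc 0),(Suc (Suc 0)),0,0] = 0"
  by (simp add: Sop_Nil4 FF0 numeral_3_eq_3 Jm_def Rm0_tab Rtab_def)
lemma bi_1201: "Sop Jm (FF (br x y y) 0) [(Suc 0),(Suc (Suc 0)),0,(Suc 0)] = 0"
  by (simp add: Sop_Nil4 FF0 numeral_3_eq_3 Jm_def Rm0_tab Rtab_def)
lemma bi_1202: "Sop Jm (FF (br x y y) 0) [(Suc 0),(Suc (Suc 0)),0,(Suc (Suc 0))] = 0"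
  by (simp add: Sop_Nil4 FF0 numeral_3_eq_3 Jm_def Rm0_tab Rtab_def)
lemma bi_1210: "Sop Jm (FF (br x y y) 0) [(Suc 0),(Suc (Suc 0)),(Suc 0),0] = 0"
  by (simp add: Sop_Nil4 FF0 numeral_3_eq_3 Jm_def Rm0_tab Rtab_def)
lemma bi_1211: "Sop Jm (FF (br x y y) 0) [(Suc 0),(Suc (Suc 0)),(Suc 0),(Suc 0)] = 0"
  by (simp add: Sop_Nil4 FF0 numeral_3_eq_3 Jm_def Rm0_tab Rtab_def)
lemma bi_1212: "Sop Jm (FF (br x y y) 0) [(Suc 0),(Suc (Suc 0)),(Suc 0),(Suc (Suc 0))] = 0"
  by (simp add: Sop_Nil4 FF0 numeral_3_eq_3 Jm_def Rm0_tab Rtab_def)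
lemma bi_1220: "Sop Jm (FF (br x y y) 0) [(Suc 0),(Suc (Suc 0)),(Suc (Suc 0)),0] = 0"
  by (simp add: Sop_Nil4 FF0 numeral_3_eq_3 Jm_def Rm0_tab Rtab_def)
lemma bi_1221: "Sop Jm (FF (br x y y) 0) [(Suc 0),(Suc (Suc 0)),(Suc (Suc 0)),(Suc 0)] = 0"
  by (simp add: Sop_Nil4 FF0 numeral_3_eq_3 Jm_def Rm0_tab Rtab_def)
lemma bi_1222: "Sop Jm (FF (br x y y) 0) [(Suc 0),(Suc (Suc 0)),(Suc (Suc 0)),(Suc (Suc 0))] = 0"
  by (simp add: Sop_Nil4 FF0 numeral_3_eq_3 Jm_def Rm0_tab Rtab_def)
lemma bi_2000: "Sop Jm (FF (br x y y) 0) [(Suc (Suc 0)),0,0,0] = 0"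
  by (simp add: Sop_Nil4 FF0 numeral_3_eq_3 Jm_def Rm0_tab Rtab_def)
lemma bi_2001: "Sop Jm (FF (br x y y) 0) [(Suc (Suc 0)),0,0,(Suc 0)] = 0"
  by (simp add: Sop_Nil4 FF0 numeral_3_eq_3 Jm_def Rm0_tab Rtab_def)
lemma bi_2002: "Sop Jm (FF (br x y y) 0) [(Suc (Suc 0)),0,0,(Suc (Suc 0))] = 0"
  by (simp add: Sop_Nil4 FF0 numeral_3_eq_3 Jm_def Rm0_tab Rtab_def)
lemma bi_2010: "Sop Jm (FF (br x y y) 0) [(Suc (Suc 0)),0,(Suc 0),0] = 0"
  by (simp add: Sop_Nil4 FF0 numeral_3_eq_3 Jm_def Rm0_tab Rtab_def)
lemma bi_2011: "Sop Jm (FF (br x y y) 0) [(Suc (Suc 0)),0,(Suc 0),(Suc 0)] = 0"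
  by (simp add: Sop_Nil4 FF0 numeral_3_eq_3 Jm_def Rm0_tab Rtab_def)
lemma bi_2012: "Sop Jm (FF (br x y y) 0) [(Suc (Suc 0)),0,(Suc 0),(Suc (Suc 0))] = 0"
  by (simp add: Sop_Nil4 FF0 numeral_3_eq_3 Jm_def Rm0_tab Rtab_def)
lemma bi_2020: "Sop Jm (FF (br x y y) 0) [(Suc (Suc 0)),0,(Suc (Suc 0)),0] = 0"
  by (simp add: Sop_Nil4 FF0 numeral_3_eq_3 Jm_def Rm0_tab Rtab_def)
lemma bi_2021: "Sop Jm (FF (br x y y) 0) [(Suc (Suc 0)),0,(Suc (Suc 0)),(Suc 0)] = 0"
  by (simp add: Sop_Nil4 FF0 numeral_3_eq_3 Jm_def Rm0_tab Rtab_def)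
lemma bi_2022: "Sop Jm (FF (br x y y) 0) [(Suc (Suc 0)),0,(Suc (Suc 0)),(Suc (Suc 0))] = 0"
  by (simp add: Sop_Nil4 FF0 numeral_3_eq_3 Jm_def Rm0_tab Rtab_def)
lemma bi_2100: "Sop Jm (FF (br x y y) 0) [(Suc (Suc 0)),(Suc 0),0,0] = 0"
  by (simp add: Sop_Nil4 FF0 numeral_3_eq_3 Jm_def Rm0_tab Rtab_def)
lemma bi_2101: "Sop Jm (FF (br x y y) 0) [(Suc (Suc 0)),(Suc 0),0,(Suc 0)] = 0"
  by (simp add: Sop_Nil4 FF0 numeral_3_eq_3 Jm_def Rm0_tab Rtab_def)
lemma bi_2102: "Sop Jm (FF (br x y y) 0) [(Suc (Suc 0)),(Suc 0),0,(Suc (Suc 0))] = 0"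
  by (simp add: Sop_Nil4 FF0 numeral_3_eq_3 Jm_def Rm0_tab Rtab_def)
lemma bi_2110: "Sop Jm (FF (br x y y) 0) [(Suc (Suc 0)),(Suc 0),(Suc 0),0] = 0"
  by (simp add: Sop_Nil4 FF0 numeral_3_eq_3 Jm_def Rm0_tab Rtab_def)
lemma bi_2111: "Sop Jm (FF (br x y y) 0) [(Suc (Suc 0)),(Suc 0),(Suc 0),(Suc 0)] = 0"
  by (simp add: Sop_Nil4 FF0 numeral_3_eq_3 Jm_def Rm0_tab Rtab_def)
lemma bi_2112: "Sop Jm (FF (br x y y) 0) [(Suc (Suc 0)),(Suc 0),(Suc 0),(Suc (Suc 0))] = 0"
  by (simp add: Sop_Nil4 FF0 numeral_3_eq_3 Jm_def Rm0_tab Rtab_def)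
lemma bi_2120: "Sop Jm (FF (br x y y) 0) [(Suc (Suc 0)),(Suc 0),(Suc (Suc 0)),0] = 0"
  by (simp add: Sop_Nil4 FF0 numeral_3_eq_3 Jm_def Rm0_tab Rtab_def)
lemma bi_2121: "Sop Jm (FF (br x y y) 0) [(Suc (Suc 0)),(Suc 0),(Suc (Suc 0)),(Suc 0)] = 0"
  by (simp add: Sop_Nil4 FF0 numeral_3_eq_3 Jm_def Rm0_tab Rtab_def)
lemma bi_2122: "Sop Jm (FF (br x y y) 0) [(Suc (Suc 0)),(Suc 0),(Suc (Suc 0)),(Suc (Suc 0))] = 0"
  by (simp add: Sop_Nil4 FF0 numeral_3_eq_3 Jm_def Rm0_tab Rtab_def)
lemma bi_2200: "Sop Jm (FF (br x y y) 0) [(Suc (Suc 0)),(Suc (Suc 0)),0,0] = 0"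
  by (simp add: Sop_Nil4 FF0 numeral_3_eq_3 Jm_def Rm0_tab Rtab_def)
lemma bi_2201: "Sop Jm (FF (br x y y) 0) [(Suc (Suc 0)),(Suc (Suc 0)),0,(Suc 0)] = 0"
  by (simp add: Sop_Nil4 FF0 numeral_3_eq_3 Jm_def Rm0_tab Rtab_def)
lemma bi_2202: "Sop Jm (FF (br x y y) 0) [(Suc (Suc 0)),(Suc (Suc 0)),0,(Suc (Suc 0))] = 0"
  by (simp add: Sop_Nil4 FF0 numeral_3_eq_3 Jm_def Rm0_tab Rtab_def)
lemma bi_2210: "Sop Jm (FF (br x y y) 0) [(Suc (Suc 0)),(Suc (Suc 0)),(Suc 0),0] = 0"
  by (simp add: Sop_Nil4 FF0 numeral_3_eq_3 Jm_def Rm0_tab Rtab_def)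
lemma bi_2211: "Sop Jm (FF (br x y y) 0) [(Suc (Suc 0)),(Suc (Suc 0)),(Suc 0),(Suc 0)] = 0"
  by (simp add: Sop_Nil4 FF0 numeral_3_eq_3 Jm_def Rm0_tab Rtab_def)
lemma bi_2212: "Sop Jm (FF (br x y y) 0) [(Suc (Suc 0)),(Suc (Suc 0)),(Suc 0),(Suc (Suc 0))] = 0"
  by (simp add: Sop_Nil4 FF0 numeral_3_eq_3 Jm_def Rm0_tab Rtab_def)
lemma bi_2220: "Sop Jm (FF (br x y y) 0) [(Suc (Suc 0)),(Suc (Suc 0)),(Suc (Suc 0)),0] = 0"
  by (simp add: Sop_Nil4 FF0 numeral_3_eq_3 Jm_def Rm0_tab Rtab_def)
lemma bi_2221: "Sop Jm (FF (br x y y) 0) [(Suc (Suc 0)),(Suc (Suc 0)),(Suc (Suc 0)),(Suc 0)] = 0"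
  by (simp add: Sop_Nil4 FF0 numeral_3_eq_3 Jm_def Rm0_tab Rtab_def)
lemma bi_2222: "Sop Jm (FF (br x y y) 0) [(Suc (Suc 0)),(Suc (Suc 0)),(Suc (Suc 0)),(Suc (Suc 0))] = 0"
  by (simp add: Sop_Nil4 FF0 numeral_3_eq_3 Jm_def Rm0_tab Rtab_def)
lemma base_inv_all:
  "\<forall>i<3. \<forall>j<3. \<forall>m<3. \<forall>l<3. Sop Jm (FF (br x y y) 0) [i,j,m,l] = 0"
  unfolding numeral_3_eq_3 less_Suc_eq less_nat_zero_code by (simp add: bi_0000 bi_0001 bi_0002 bi_0010 bi_0011 bi_0012 bi_0020 bi_0021 bi_0022 bi_0100 bi_0101 bi_0102 bi_0110 bi_0111 bi_0112 bi_0120 bi_0121 bi_0122 bi_0200 bi_0201 bi_0202 bi_0210 bi_0211 bi_0212 bi_0220 bi_0221 bi_0222 bi_1000 bi_1001 bi_1002 bi_1010 bi_1011 bi_1012 bi_1020 bi_1021 bi_1022 bi_1100 bi_1101 bi_1102 bi_1110 bi_1111 bi_1112 bi_1120 bi_1121 bi_1122 bi_1200 bi_1201 bi_1202 bi_1210 bi_1211 bi_1212 bi_1220 bi_1221 bi_1222 bi_2000 bi_2001 bi_2002 bi_2010 bi_2011 bi_2012 bi_2020 bi_2021 bi_2022 bi_2100 bi_2101 bi_2102 bi_2110 bi_2111 bi_2112 bi_2120 bi_2121 bi_2122 bi_2200 bi_2201 bi_2202 bi_2210 bi_2211 bi_2212 bi_2220 bi_2221 bi_2222)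


lemma Sop_cong: "(\<And>a p. a < length xs \<Longrightarrow> p < 3 \<Longrightarrow> F (xs[a:=p]) = G (xs[a:=p])) \<Longrightarrow> Sop A F xs = Sop A G xs"
  unfolding Sop_def by (intro sum.cong refl) auto

lemma Sop_zeroF: "(\<And>a p. a < length xs \<Longrightarrow> p < 3 \<Longrightarrow> F (xs[a:=p]) = 0) \<Longrightarrow> Sop A F xs = 0"
  unfolding Sop_def by (intro sum.neutral ballI) auto

lemma Sop_zeroM: "(\<And>q r. q < 3 \<Longrightarrow> r < 3 \<Longrightarrow> M q r = 0) \<Longrightarrow> set xs \<subseteq> {..<3} \<Longrightarrow> Sop M F xs = 0"
  unfolding Sop_def by (intro sum.neutral ballI) (auto simp: subset_iff)

lemma Sop_neg: "Sop A (\<lambda>ys. - F ys) xs = - Sop A F xs"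
  unfolding Sop_def by (simp add: sum_negf)

lemma Sop_scale: "Sop (\<lambda>q r. c * A q r) F xs = c * Sop A F xs"
  unfolding Sop_def by (simp add: sum_distrib_left mult.assoc)

lemma Sop_add: "Sop A F xs + Sop B F xs = Sop (\<lambda>q r. A q r + B q r) F xs"
  unfolding Sop_def by (simp add: sum.distrib[symmetric] distrib_right)

lemma Sop_sum: "(\<Sum>p\<in>P. c p * Sop (A p) F xs) = Sop (\<lambda>q r. \<Sum>p\<in>P. c p * A p q r) F xs"
proof -
  have "(\<Sum>p\<in>P. c p * Sop (A p) F xs) = (\<Sum>p\<in>P. \<Sum>a<length xs. \<Sum>q<3. c p * A p q (xs!a) * F (xs[a:=q]))"
    unfolding Sop_def by (simp add: sum_distrib_left mult.assoc)
  also have "\<dots> = (\<Sum>a<length xs. \<Sum>p\<in>P. \<Sum>q<3. c p * A p q (xs!a) * F (xs[a:=q]))"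
    by (rule sum.swap)
  also have "\<dots> = (\<Sum>a<length xs. \<Sum>q<3. \<Sum>p\<in>P. c p * A p q (xs!a) * F (xs[a:=q]))"
    by (rule sum.cong[OF refl], rule sum.swap)
  also have "\<dots> = Sop (\<lambda>q r. \<Sum>p\<in>P. c p * A p q r) F xs"
    unfolding Sop_def by (simp add: sum_distrib_right)
  finally show ?thesis .
qed

lemma Sop_bilin: "Sop A F xs - Sop A' G xs = Sop A (\<lambda>ys. F ys - G ys) xs + Sop (\<lambda>q r. A q r - A' q r) G xs"
  unfolding Sop_def by (simp add: sum.distrib[symmetric] sum_subtractf[symmetric] algebra_simps)

lemma Sop_bound:
  assumes "\<And>q r. \<bar>A q r\<bar> \<le> a" "\<And>b p. b < length xs \<Longrightarrow> p < 3 \<Longrightarrow> \<bar>F (xs[b:=p])\<bar> \<le> f"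
  shows "\<bar>Sop A F xs\<bar> \<le> real (length xs) * 3 * (a * f)"
proof -
  have a0: "0 \<le> a" using assms(1)[of 0 0] by linarith
  have "\<bar>Sop A F xs\<bar> \<le> (\<Sum>b<length xs. \<bar>\<Sum>p<3. A p (xs!b) * F (xs[b:=p])\<bar>)"
    unfolding Sop_def by (rule sum_abs)
  also have "\<dots> \<le> (\<Sum>b<length xs. \<Sum>p<3::nat. \<bar>A p (xs!b) * F (xs[b:=p])\<bar>)"
    by (intro sum_mono sum_abs)
  also have "\<dots> \<le> (\<Sum>b<length xs. \<Sum>p<3::nat. a * f)"
    by (intro sum_mono) (auto simp: abs_mult a0 intro!: mult_mono assms)
  also have "\<dots> = real (length xs) * 3 * (a * f)" by simp
  finally show ?thesis .
qed


lemma br_lin: "br x y z a b l = x * br 1 0 0 a b l + y * br 0 1 0 a b l + z * br 0 0 1 a b l"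
  by (simp add: br_def)

lemma LC_lin: "LC (br x y z) w a p = x * LC (br 1 0 0) w a p + y * LC (br 0 1 0) w a p + z * LC (br 0 0 1) w a p"
  unfolding LC_def br_lin[of x y z] by (simp add: algebra_simps add_divide_distrib diff_divide_distrib)

lemma LC_u1: "\<bar>LC (br 1 0 0) w a p\<bar> \<le> 1/2" by (simp add: LC_br)
lemma LC_u2: "\<bar>LC (br 0 1 0) w a p\<bar> \<le> 1/2" by (simp add: LC_br)
lemma LC_u3: "\<bar>LC (br 0 0 1) w a p\<bar> \<le> 1/2" by (simp add: LC_br)
lemma LC_yz: "w \<noteq> 0 \<Longrightarrow> LC (br 0 1 0) w a p = - LC (br 0 0 1) w a p" by (simp add: LC_br)


lemma absmul_half: "\<bar>c::real\<bar> \<le> 1/2 \<Longrightarrow> \<bar>x * c\<bar> \<le> \<bar>x\<bar>/2"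
proof -
  assume "\<bar>c\<bar> \<le> 1/2"
  then have "\<bar>x\<bar> * \<bar>c\<bar> \<le> \<bar>x\<bar> * (1/2)" by (intro mult_left_mono) auto
  then show ?thesis by (simp add: abs_mult)
qed

lemma nab_all: "\<bar>nablaM (br x y z) w m l\<bar> \<le> \<bar>x\<bar> + \<bar>y\<bar> + \<bar>z\<bar>"
proof -
  have "\<bar>x * LC (br 1 0 0) w l m\<bar> \<le> \<bar>x\<bar>/2" "\<bar>y * LC (br 0 1 0) w l m\<bar> \<le> \<bar>y\<bar>/2" "\<bar>z * LC (br 0 0 1) w l m\<bar> \<le> \<bar>z\<bar>/2"
    by (intro absmul_half LC_u1 LC_u2 LC_u3)+
  then show ?thesis unfolding nablaM_def LC_lin[of x y z]
    using abs_triangle_ineq[of "x * LC (br 1 0 0) w l m + y * LC (br 0 1 0) w l m" "z * LC (br 0 0 1) w l m"]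
      abs_triangle_ineq[of "x * LC (br 1 0 0) w l m" "y * LC (br 0 1 0) w l m"]
      abs_ge_zero[of x] abs_ge_zero[of y] abs_ge_zero[of z] by linarith
qed

lemma nab_small: "w \<noteq> 0 \<Longrightarrow> \<bar>nablaM (br x y z) w m l\<bar> \<le> \<bar>x\<bar> + \<bar>z - y\<bar>"
proof -
  assume w: "w \<noteq> 0"
  have e: "nablaM (br x y z) w m l = x * LC (br 1 0 0) w l m + (z - y) * LC (br 0 0 1) w l m"
    unfolding nablaM_def LC_lin[of x y z] LC_yz[OF w] by (simp add: algebra_simps)
  have "\<bar>x * LC (br 1 0 0) w l m\<bar> \<le> \<bar>x\<bar>/2" "\<bar>(z - y) * LC (br 0 0 1) w l m\<bar> \<le> \<bar>z - y\<bar>/2"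
    by (intro absmul_half LC_u1 LC_u3)+
  then show ?thesis unfolding e
    using abs_triangle_ineq[of "x * LC (br 1 0 0) w l m" "(z - y) * LC (br 0 0 1) w l m"]
      abs_ge_zero[of x] abs_ge_zero[of "z - y"] by linarith
qed

lemma nab_diff: "\<bar>nablaM (br x y z) w m l - nablaM (br x y y) w m l\<bar> \<le> \<bar>z - y\<bar>"
proof -
  have e: "nablaM (br x y z) w m l - nablaM (br x y y) w m l = (z - y) * LC (br 0 0 1) w l m"
    unfolding nablaM_def LC_lin[of x y z] LC_lin[of x y y] by (simp add: algebra_simps)
  have "\<bar>(z - y) * LC (br 0 0 1) w l m\<bar> \<le> \<bar>z - y\<bar>/2"
    by (intro absmul_half LC_u3)
  moreover have "\<bar>z - y\<bar>/2 \<le> \<bar>z - y\<bar>" by simp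
  ultimately show ?thesis unfolding e by (rule order_trans)
qed


lemma br_diff: "\<bar>br x y z a b l - br x y y a b l\<bar> \<le> \<bar>z - y\<bar>"
proof -
  have e: "br x y z a b l - br x y y a b l = (z - y) * br 0 0 1 a b l" by (simp add: br_def)
  have "\<bar>br 0 0 1 a b l\<bar> \<le> 1" by (simp add: br_def)
  then have "\<bar>z - y\<bar> * \<bar>br 0 0 1 a b l\<bar> \<le> \<bar>z - y\<bar> * 1" by (intro mult_left_mono) auto
  then show ?thesis unfolding e by (simp add: abs_mult)
qed


lemma absd: "\<bar>(if P then 1 else 0) - (if Q then 1 else (0::real))\<bar> \<le> 1"
  by (cases P; cases Q) simp_all

lemma Rtab_bound: "\<bar>Rtab x y i j m l\<bar> \<le> x*x + \<bar>x\<bar> * \<bar>y\<bar>"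
proof -
  define \<kappa> where "\<kappa> = (if i = 0 \<or> j = 0 then - (x*x)/4 else 3*(x*x)/4 - x*y)"
  define \<delta> where "\<delta> = ((if i = m \<and> j = l then 1 else 0) - (if i = l \<and> j = m then 1 else (0::real)))"
  have R: "Rtab x y i j m l = \<kappa> * \<delta>" unfolding Rtab_def \<kappa>_def \<delta>_def ..
  have d: "\<bar>\<delta>\<bar> \<le> 1" unfolding \<delta>_def by (rule absd)
  have xx: "0 \<le> x*x" by simp
  have xy: "\<bar>x*y\<bar> = \<bar>x\<bar> * \<bar>y\<bar>" by (rule abs_mult)
  have xy0: "0 \<le> \<bar>x\<bar> * \<bar>y\<bar>" by simp
  have k: "\<bar>\<kappa>\<bar> \<le> x*x + \<bar>x\<bar> * \<bar>y\<bar>"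
  proof (cases "i = 0 \<or> j = 0")
    case True
    then have e: "\<kappa> = - (x*x)/4" unfolding \<kappa>_def by simp
    have "- (x*x)/4 \<le> 0" using xx by simp
    then have "\<bar>- (x*x)/4\<bar> = - (- (x*x)/4)" by (rule abs_of_nonpos)
    then show ?thesis unfolding e using xx xy0 by linarith
  next
    case False
    then have e: "\<kappa> = 3*(x*x)/4 - x*y" unfolding \<kappa>_def by simp
    have t: "\<bar>3*(x*x)/4 - x*y\<bar> \<le> \<bar>3*(x*x)/4\<bar> + \<bar>x*y\<bar>" by (rule abs_triangle_ineq4)
    have "0 \<le> 3*(x*x)/4" using xx by simp
    then have "\<bar>3*(x*x)/4\<bar> = 3*(x*x)/4" by (rule abs_of_nonneg)
    then show ?thesis unfolding e using t xx xy by linarith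
  qed
  have "\<bar>\<kappa> * \<delta>\<bar> = \<bar>\<kappa>\<bar> * \<bar>\<delta>\<bar>" by (rule abs_mult)
  also have "\<dots> \<le> (x*x + \<bar>x\<bar> * \<bar>y\<bar>) * 1" by (rule mult_mono[OF k d]) (simp_all add: xy0)
  finally show ?thesis using R by simp
qed

lemma prod_diff:
  fixes a b a' b' B E :: real
  assumes "\<bar>a\<bar> \<le> B" "\<bar>b\<bar> \<le> B" "\<bar>a'\<bar> \<le> B" "\<bar>b'\<bar> \<le> B" "\<bar>a - a'\<bar> \<le> E" "\<bar>b - b'\<bar> \<le> E"
  shows "\<bar>a*b - a'*b'\<bar> \<le> 2*B*E"
proof -
  have "a*b - a'*b' = (a - a')*b + a'*(b - b')" by (simp add: algebra_simps)
  then have "\<bar>a*b - a'*b'\<bar> \<le> \<bar>a - a'\<bar>*\<bar>b\<bar> + \<bar>a'\<bar>*\<bar>b - b'\<bar>" by (simp add: abs_mult[symmetric] abs_triangle_ineq)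
  also have "\<dots> \<le> E*B + B*E"
    using assms by (intro add_mono mult_mono) auto
  finally show ?thesis by simp
qed



lemma Rm0_diff:
  assumes c1: "\<And>a b l. \<bar>c a b l\<bar> \<le> B" and c2: "\<And>a b l. \<bar>c' a b l\<bar> \<le> B"
    and c3: "\<And>a b l. \<bar>c a b l - c' a b l\<bar> \<le> E"
    and n1: "\<And>w m l. \<bar>nablaM c w m l\<bar> \<le> B" and n2: "\<And>w m l. \<bar>nablaM c' w m l\<bar> \<le> B"
    and n3: "\<And>w m l. \<bar>nablaM c w m l - nablaM c' w m l\<bar> \<le> E"
  shows "\<bar>Rm0 c i j m l - Rm0 c' i j m l\<bar> \<le> 18*B*E"
proof -
  define N where "N = nablaM c"
  define N' where "N' = nablaM c'"
  have pd: "\<bar>a*b - a'*b'\<bar> \<le> 2*B*E" if "\<bar>a\<bar> \<le> B" "\<bar>b\<bar> \<le> B" "\<bar>a'\<bar> \<le> B" "\<bar>b'\<bar> \<le> B" "\<bar>a - a'\<bar> \<le> E" "\<bar>b - b'\<bar> \<le> E" for a b a' b'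
    using prod_diff[OF that] .
  have S1: "\<bar>(\<Sum>p<3. c i j p * N p m l) - (\<Sum>p<3. c' i j p * N' p m l)\<bar> \<le> 6*B*E"
  proof -
    have "\<bar>(\<Sum>p<3. c i j p * N p m l) - (\<Sum>p<3. c' i j p * N' p m l)\<bar> = \<bar>\<Sum>p<3. c i j p * N p m l - c' i j p * N' p m l\<bar>"
      by (simp add: sum_subtractf)
    also have "\<dots> \<le> (\<Sum>p<3. \<bar>c i j p * N p m l - c' i j p * N' p m l\<bar>)" by (rule sum_abs)
    also have "\<dots> \<le> (\<Sum>p<3::nat. 2*B*E)"
      by (intro sum_mono pd) (auto simp: N_def N'_def c1 c2 c3 n1 n2 n3)
    finally show ?thesis by simp
  qed
  have S2: "\<bar>(\<Sum>q<3. N i m q * N j q l - N j m q * N i q l) - (\<Sum>q<3. N' i m q * N' j q l - N' j m q * N' i q l)\<bar> \<le> 12*B*E"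
  proof -
    have "\<bar>(\<Sum>q<3. N i m q * N j q l - N j m q * N i q l) - (\<Sum>q<3. N' i m q * N' j q l - N' j m q * N' i q l)\<bar>
        = \<bar>\<Sum>q<3. (N i m q * N j q l - N' i m q * N' j q l) - (N j m q * N i q l - N' j m q * N' i q l)\<bar>"
      by (simp add: sum_subtractf[symmetric] algebra_simps)
    also have "\<dots> \<le> (\<Sum>q<3. \<bar>(N i m q * N j q l - N' i m q * N' j q l) - (N j m q * N i q l - N' j m q * N' i q l)\<bar>)" by (rule sum_abs)
    also have "\<dots> \<le> (\<Sum>q<3::nat. 4*B*E)"
    proof (intro sum_mono)
      fix q
      have "\<bar>N i m q * N j q l - N' i m q * N' j q l\<bar> \<le> 2*B*E"
        by (intro pd) (auto simp: N_def N'_def n1 n2 n3)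
      moreover have "\<bar>N j m q * N i q l - N' j m q * N' i q l\<bar> \<le> 2*B*E"
        by (intro pd) (auto simp: N_def N'_def n1 n2 n3)
      ultimately show "\<bar>(N i m q * N j q l - N' i m q * N' j q l) - (N j m q * N i q l - N' j m q * N' i q l)\<bar> \<le> 4*B*E"
        by linarith
    qed
    finally show ?thesis by simp
  qed
  have e: "Rm0 c i j m l - Rm0 c' i j m l = ((\<Sum>p<3. c i j p * N p m l) - (\<Sum>p<3. c' i j p * N' p m l))
      - ((\<Sum>q<3. N i m q * N j q l - N j m q * N i q l) - (\<Sum>q<3. N' i m q * N' j q l - N' j m q * N' i q l))"
    unfolding Rm0_def N_def N'_def by simp
  show ?thesis unfolding e using S1 S2 by linarith
qed

lemma inv: "\<forall>xs. length xs = k + 4 \<and> set xs \<subseteq> {..<3} \<longrightarrow> Sop Jm (FF (br x y y) k) xs = 0"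
proof (induction k)
  case 0
  show ?case
  proof (intro allI impI)
    fix xs :: "nat list" assume a: "length xs = 0 + 4 \<and> set xs \<subseteq> {..<3}"
    then obtain vs i j m l where xs: "xs = vs @ [i,j,m,l]" using dec4[of xs] by auto
    with a have "vs = []" "i < 3" "j < 3" "m < 3" "l < 3" by auto
    then show "Sop Jm (FF (br x y y) 0) xs = 0" using base_inv_all xs by simp
  qed
next
  case (Suc k)
  show ?case
  proof (intro allI impI)
    fix xs :: "nat list" assume a: "length xs = Suc k + 4 \<and> set xs \<subseteq> {..<3}"
    then obtain w xs' where xs: "xs = w # xs'" by (cases xs) auto
    with a have w: "w < 3" and l': "length xs' = k + 4" and s': "set xs' \<subseteq> {..<3}" by auto
    define cB where "cB = br x y y"
    define G where "G = FF cB k"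
    define N where "N = nablaM cB"
    have skew: "\<And>a b l. cB a b l = - cB b a l" unfolding cB_def by (rule br_skew)
    have r: "FF cB (Suc k) (p#ys) = - Sop (N p) G ys" if "length ys = k + 4" for p ys
      unfolding N_def G_def by (rule FF_Suc[OF skew]) (use that in simp)
    have IH: "Sop Jm G ys = 0" if "length ys = k + 4" "set ys \<subseteq> {..<3}" for ys
      using Suc.IH that unfolding G_def cB_def by blast
    have "Sop Jm (FF cB (Suc k)) (w#xs') = (\<Sum>p<3. Jm p w * FF cB (Suc k) (p#xs')) + Sop Jm (\<lambda>ys. FF cB (Suc k) (w#ys)) xs'"
      by (rule Sop_Cons)
    also have "Sop Jm (\<lambda>ys. FF cB (Suc k) (w#ys)) xs' = Sop Jm (\<lambda>ys. - Sop (N w) G ys) xs'"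
      by (rule Sop_cong) (simp add: r l')
    also have "\<dots> = - Sop Jm (Sop (N w) G) xs'" by (rule Sop_neg)
    also have "Sop Jm (Sop (N w) G) xs' = Sop (N w) (Sop Jm G) xs' + Sop (\<lambda>p q. (\<Sum>r<3. N w p r * Jm r q) - (\<Sum>r<3. Jm p r * N w r q)) G xs'"
      by (rule Sop_comm)
    also have "Sop (N w) (Sop Jm G) xs' = 0"
    proof (rule Sop_zeroF)
      fix a p assume "a < length xs'" "p < (3::nat)"
      then show "Sop Jm G (xs'[a:=p]) = 0"
        using s' l' set_update_subset_insert[of xs' a p] by (intro IH) auto
    qed
    also have "(\<Sum>p<3. Jm p w * FF cB (Suc k) (p#xs')) = - (\<Sum>p<3. Jm p w * Sop (N p) G xs')"
      by (simp add: r l' sum_negf[symmetric])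
    also have "(\<Sum>p<3. Jm p w * Sop (N p) G xs') = Sop (\<lambda>q r. \<Sum>p<3. Jm p w * N p q r) G xs'"
      by (rule Sop_sum)
    finally have "Sop Jm (FF cB (Suc k)) (w#xs') = - (Sop (\<lambda>q r. \<Sum>p<3. Jm p w * N p q r) G xs' + Sop (\<lambda>p q. (\<Sum>r<3. N w p r * Jm r q) - (\<Sum>r<3. Jm p r * N w r q)) G xs')"
      by simp
    also have "\<dots> = - Sop (\<lambda>q r. (\<Sum>p<3. Jm p w * N p q r) + ((\<Sum>s<3. N w q s * Jm s r) - (\<Sum>s<3. Jm q s * N w s r))) G xs'"
      by (simp only: Sop_add)
    also have "\<dots> = 0"
      using Sop_zeroM[OF _ s'] Jinv_all w unfolding N_def cB_def by simp
    finally show "Sop Jm (FF (br x y y) (Suc k)) xs = 0" unfolding xs cB_def .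
  qed
qed


definition hyp :: "real \<Rightarrow> real \<Rightarrow> real \<Rightarrow> real \<Rightarrow> real \<Rightarrow> real \<Rightarrow> real \<Rightarrow> bool" where
"hyp K S0 x y z s t \<longleftrightarrow> 0 < s \<and> s * t = 1 \<and> s \<le> S0 \<and> abs x \<le> K * s \<and> abs y \<le> K * t \<and> abs z \<le> K * t"


lemma hyp_basic:
  assumes "hyp K S0 x y z s t"
  shows "0 < t" "0 \<le> K" "s \<le> S0^2 * t" "s^k \<le> S0^(2*k+2) * t^(k+2)"
proof -
  have s: "0 < s" "s * t = 1" "s \<le> S0" "\<bar>x\<bar> \<le> K * s" using assms unfolding hyp_def by auto
  have te: "t = 1 / s" using s by (simp add: field_simps)
  show t: "0 < t" using s te by simp
  have "0 \<le> K * s" using s(4) abs_ge_zero order_trans by blast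
  then show "0 \<le> K" using s(1) by (simp add: zero_le_mult_iff)
  have ss: "s * s \<le> S0 * S0" using s by (intro mult_mono) auto
  have "s = (s * s) * t" using s by (simp add: algebra_simps)
  also have "\<dots> \<le> (S0 * S0) * t" using ss t by (intro mult_right_mono) auto
  finally show "s \<le> S0^2 * t" by (simp add: power2_eq_square)
  have "s^k = s^k * (s * t)^(k+2)" using s by simp
  also have "\<dots> = s^(k + (k+2)) * t^(k+2)" by (simp only: power_mult_distrib power_add mult_ac)
  also have "\<dots> = s^(2*k+2) * t^(k+2)" by (simp add: mult_2)
  also have "\<dots> \<le> S0^(2*k+2) * t^(k+2)" using s t by (intro mult_right_mono power_mono) auto
  finally show "s^k \<le> S0^(2*k+2) * t^(k+2)" .
qed


lemma len4: "length xs = 0 + 4 \<Longrightarrow> set xs \<subseteq> {..<3} \<Longrightarrow> \<exists>i j m l. xs = [i,j,m,l] \<and> i < 3 \<and> j < 3 \<and> m < 3 \<and> l < 3"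
proof -
  assume a: "length xs = 0 + 4" "set xs \<subseteq> {..<3}"
  then obtain vs i j m l where xs: "xs = vs @ [i,j,m,l]" using dec4[of xs] by auto
  have "vs = []" using a(1) xs by simp
  then have xs2: "xs = [i,j,m,l]" using xs by simp
  have "i < 3 \<and> j < 3 \<and> m < 3 \<and> l < 3" using a(2) unfolding xs2 by simp
  then show ?thesis using xs2 by blast
qed

lemma FF_Suc_br: "length xs = k + 4 \<Longrightarrow> FF (br x y z) (Suc k) (w#xs) = - Sop (nablaM (br x y z) w) (FF (br x y z) k) xs"
  by (rule FF_Suc) (auto intro: br_skew)

lemma G_bound:
  assumes K0: "0 \<le> K"
  shows "\<exists>C\<ge>0. \<forall>x y z s t. hyp K S0 x y z s t \<longrightarrow> (\<forall>xs. length xs = k + 4 \<and> set xs \<subseteq> {..<3} \<longrightarrow> \<bar>FF (br x y y) k xs\<bar> \<le> C * s^k)"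
proof (induction k)
  case 0
  show ?case
  proof (intro exI[of _ "K * K * S0^2 + K * K"] conjI allI impI)
    show "0 \<le> K * K * S0^2 + K * K" by simp
    fix x y z s t and xs :: "nat list" assume h: "hyp K S0 x y z s t" and a: "length xs = 0 + 4 \<and> set xs \<subseteq> {..<3}"
    obtain i j m l where xs: "xs = [i,j,m,l]" "i < 3" "j < 3" "m < 3" "l < 3" using len4[OF conjunct1[OF a] conjunct2[OF a]] by blast
    have hs: "0 < s" "s * t = 1" "s \<le> S0" "\<bar>x\<bar> \<le> K * s" "\<bar>y\<bar> \<le> K * t" using h unfolding hyp_def by auto
    have "FF (br x y y) 0 xs = Rtab x y i j m l" using xs by (simp add: FF0 Rm0_tab)
    then have "\<bar>FF (br x y y) 0 xs\<bar> \<le> x * x + \<bar>x\<bar> * \<bar>y\<bar>" using Rtab_bound by simp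
    also have "x * x \<le> (K * S0) * (K * S0)"
    proof -
      have "\<bar>x\<bar> \<le> K * S0" using hs K0 by (meson mult_left_mono order_trans)
      then have "\<bar>x\<bar> * \<bar>x\<bar> \<le> (K * S0) * (K * S0)" by (intro mult_mono) auto
      then show ?thesis by (simp add: abs_mult[symmetric])
    qed
    also have "\<bar>x\<bar> * \<bar>y\<bar> \<le> (K * s) * (K * t)" using hs by (intro mult_mono) auto
    also have "(K * s) * (K * t) = K * K" using hs by (simp add: algebra_simps)
    finally show "\<bar>FF (br x y y) 0 xs\<bar> \<le> (K * K * S0^2 + K * K) * s^0" by (simp add: power2_eq_square algebra_simps)
  qed
next
  case (Suc k)
  then obtain C where C0: "0 \<le> C" and IH: "\<And>x y z s t xs. hyp K S0 x y z s t \<Longrightarrow> length xs = k + 4 \<Longrightarrow> set xs \<subseteq> {..<3} \<Longrightarrow> \<bar>FF (br x y y) k xs\<bar> \<le> C * s^k"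
    by blast
  show ?case
  proof (intro exI[of _ "3 * (real k + 4) * K * C"] conjI allI impI)
    show "0 \<le> 3 * (real k + 4) * K * C" using C0 K0 by simp
    fix x y z s t and xs :: "nat list" assume h: "hyp K S0 x y z s t" and a: "length xs = Suc k + 4 \<and> set xs \<subseteq> {..<3}"
    have hs: "0 < s" "\<bar>x\<bar> \<le> K * s" using h unfolding hyp_def by auto
    obtain w xs' where xs: "xs = w # xs'" using a by (cases xs) auto
    with a have w: "w < 3" and l': "length xs' = k + 4" and s': "set xs' \<subseteq> {..<3}" by auto
    have e: "FF (br x y y) (Suc k) xs = - Sop (nablaM (br x y y) w) (FF (br x y y) k) xs'"
      unfolding xs by (rule FF_Suc_br[OF l'])
    show "\<bar>FF (br x y y) (Suc k) xs\<bar> \<le> 3 * (real k + 4) * K * C * s ^ Suc k"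
    proof (cases "w = 0")
      case True
      have "nablaM (br x y y) w = (\<lambda>m l. ((y + y - x) / 2) * Jm m l)" using True by (simp add: nab0 fun_eq_iff)
      then have "Sop (nablaM (br x y y) w) (FF (br x y y) k) xs' = ((y + y - x) / 2) * Sop Jm (FF (br x y y) k) xs'"
        by (simp only: Sop_scale)
      also have "Sop Jm (FF (br x y y) k) xs' = 0" using inv l' s' by blast
      finally have "FF (br x y y) (Suc k) xs = 0" using e by simp
      then show ?thesis using K0 C0 hs by simp
    next
      case False
      have "\<bar>Sop (nablaM (br x y y) w) (FF (br x y y) k) xs'\<bar> \<le> real (length xs') * 3 * ((K * s) * (C * s^k))"
      proof (rule Sop_bound)
        fix q r show "\<bar>nablaM (br x y y) w q r\<bar> \<le> K * s" using nab_small[OF False, of x y y q r] hs by simp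
      next
        fix b p assume "b < length xs'" "p < (3::nat)"
        then show "\<bar>FF (br x y y) k (xs'[b:=p])\<bar> \<le> C * s^k"
          using s' l' set_update_subset_insert[of xs' b p] by (intro IH[OF h]) auto
      qed
      also have "\<dots> = 3 * (real k + 4) * K * C * s ^ Suc k" using l' by (simp add: algebra_simps)
      finally show ?thesis using e by simp
    qed
  qed
qed


lemma absmul_one: "\<bar>c::real\<bar> \<le> 1 \<Longrightarrow> \<bar>x * c\<bar> \<le> \<bar>x\<bar>"
proof -
  assume "\<bar>c\<bar> \<le> 1"
  then have "\<bar>x\<bar> * \<bar>c\<bar> \<le> \<bar>x\<bar> * 1" by (intro mult_left_mono) auto
  then show ?thesis by (simp add: abs_mult)
qed

lemma br_all: "\<bar>br x y z a b l\<bar> \<le> \<bar>x\<bar> + \<bar>y\<bar> + \<bar>z\<bar>"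
proof -
  have u: "\<bar>br 1 0 0 a b l\<bar> \<le> 1" "\<bar>br 0 1 0 a b l\<bar> \<le> 1" "\<bar>br 0 0 1 a b l\<bar> \<le> 1"
    by (simp_all add: br_def)
  have "\<bar>x * br 1 0 0 a b l\<bar> \<le> \<bar>x\<bar>" "\<bar>y * br 0 1 0 a b l\<bar> \<le> \<bar>y\<bar>" "\<bar>z * br 0 0 1 a b l\<bar> \<le> \<bar>z\<bar>"
    using u by (auto intro: absmul_one)
  then show ?thesis unfolding br_lin[of x y z]
    using abs_triangle_ineq[of "x * br 1 0 0 a b l + y * br 0 1 0 a b l" "z * br 0 0 1 a b l"]
      abs_triangle_ineq[of "x * br 1 0 0 a b l" "y * br 0 1 0 a b l"] by linarith
qed

lemma D_bound:
  assumes K0: "0 \<le> K" and S00: "0 \<le> S0"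
  shows "\<exists>D\<ge>0. \<forall>x y z s t. hyp K S0 x y z s t \<longrightarrow> (\<forall>xs. length xs = k + 4 \<and> set xs \<subseteq> {..<3} \<longrightarrow> \<bar>FF (br x y z) k xs - FF (br x y y) k xs\<bar> \<le> D * \<bar>z - y\<bar> * t^(k+1))"
proof (induction k)
  case 0
  show ?case
  proof (intro exI[of _ "18 * (K * S0^2 + 4 * K)"] conjI allI impI)
    show "0 \<le> 18 * (K * S0^2 + 4 * K)" using K0 by simp
    fix x y z s t and xs :: "nat list" assume h: "hyp K S0 x y z s t" and a: "length xs = 0 + 4 \<and> set xs \<subseteq> {..<3}"
    have t0: "0 < t" and st: "s \<le> S0^2 * t" using hyp_basic[OF h] by auto
    have hs: "0 < s" "\<bar>x\<bar> \<le> K * s" "\<bar>y\<bar> \<le> K * t" "\<bar>z\<bar> \<le> K * t" using h unfolding hyp_def by auto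
    obtain i j m l where xs: "xs = [i,j,m,l]" using len4[OF conjunct1[OF a] conjunct2[OF a]] by blast
    define B where "B = \<bar>x\<bar> + 2 * \<bar>y\<bar> + 2 * \<bar>z\<bar>"
    have "\<bar>Rm0 (br x y z) i j m l - Rm0 (br x y y) i j m l\<bar> \<le> 18 * B * \<bar>z - y\<bar>"
    proof (rule Rm0_diff)
      fix a b l show "\<bar>br x y z a b l\<bar> \<le> B" using br_all[of x y z a b l] unfolding B_def by simp
      show "\<bar>br x y y a b l\<bar> \<le> B" using br_all[of x y y a b l] unfolding B_def by simp
      show "\<bar>br x y z a b l - br x y y a b l\<bar> \<le> \<bar>z - y\<bar>" by (rule br_diff)
    next
      fix w m l show "\<bar>nablaM (br x y z) w m l\<bar> \<le> B" using nab_all[of x y z w m l] unfolding B_def by simp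
      show "\<bar>nablaM (br x y y) w m l\<bar> \<le> B" using nab_all[of x y y w m l] unfolding B_def by simp
      show "\<bar>nablaM (br x y z) w m l - nablaM (br x y y) w m l\<bar> \<le> \<bar>z - y\<bar>" by (rule nab_diff)
    qed
    also have "18 * B * \<bar>z - y\<bar> \<le> 18 * ((K * S0^2 + 4 * K) * t) * \<bar>z - y\<bar>"
    proof -
      have "K * s \<le> K * (S0^2 * t)" using st K0 by (rule mult_left_mono)
      then have "B \<le> (K * S0^2 + 4 * K) * t" unfolding B_def using hs by (simp add: algebra_simps)
      then show ?thesis by (intro mult_right_mono) auto
    qed
    finally show "\<bar>FF (br x y z) 0 xs - FF (br x y y) 0 xs\<bar> \<le> 18 * (K * S0^2 + 4 * K) * \<bar>z - y\<bar> * t^(0+1)"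
      by (simp add: xs FF0 algebra_simps)
  qed
next
  case (Suc k)
  then obtain D where D0: "0 \<le> D" and IH: "\<And>x y z s t xs. hyp K S0 x y z s t \<Longrightarrow> length xs = k + 4 \<Longrightarrow> set xs \<subseteq> {..<3} \<Longrightarrow> \<bar>FF (br x y z) k xs - FF (br x y y) k xs\<bar> \<le> D * \<bar>z - y\<bar> * t^(k+1)"
    by blast
  obtain C where C0: "0 \<le> C" and GB: "\<And>x y z s t xs. hyp K S0 x y z s t \<Longrightarrow> length xs = k + 4 \<Longrightarrow> set xs \<subseteq> {..<3} \<Longrightarrow> \<bar>FF (br x y y) k xs\<bar> \<le> C * s^k"
    using G_bound[OF K0, of S0 k] by blast
  define D' where "D' = 3 * (real k + 4) * ((K * S0^2 + 2 * K) * D + C * S0^(2*k+2))"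
  show ?case
  proof (intro exI[of _ D'] conjI allI impI)
    show "0 \<le> D'" unfolding D'_def using K0 D0 C0 S00 by simp
    fix x y z s t and xs :: "nat list" assume h: "hyp K S0 x y z s t" and a: "length xs = Suc k + 4 \<and> set xs \<subseteq> {..<3}"
    have t0: "0 < t" and st: "s \<le> S0^2 * t" and sk: "s^k \<le> S0^(2*k+2) * t^(k+2)"
      using hyp_basic[OF h] by auto
    have hs: "0 < s" "\<bar>x\<bar> \<le> K * s" "\<bar>y\<bar> \<le> K * t" "\<bar>z\<bar> \<le> K * t" using h unfolding hyp_def by auto
    obtain w xs' where xs: "xs = w # xs'" using a by (cases xs) auto
    with a have l': "length xs' = k + 4" and s': "set xs' \<subseteq> {..<3}" by auto
    define F where "F = FF (br x y z) k"
    define G where "G = FF (br x y y) k"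
    define Nc where "Nc = nablaM (br x y z) w"
    define NB where "NB = nablaM (br x y y) w"
    define E where "E = \<bar>z - y\<bar>"
    have E0: "0 \<le> E" unfolding E_def by simp
    have bl: "Sop Nc F xs' - Sop NB G xs' = Sop Nc (\<lambda>ys. F ys - G ys) xs' + Sop (\<lambda>q r. Nc q r - NB q r) G xs'"
      by (rule Sop_bilin)
    have e0: "FF (br x y z) (Suc k) xs - FF (br x y y) (Suc k) xs = - (Sop Nc F xs' - Sop NB G xs')"
      unfolding xs FF_Suc_br[OF l'] F_def G_def Nc_def NB_def by simp
    have e: "FF (br x y z) (Suc k) xs - FF (br x y y) (Suc k) xs = - (Sop Nc (\<lambda>ys. F ys - G ys) xs' + Sop (\<lambda>q r. Nc q r - NB q r) G xs')"
      unfolding e0 bl ..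
    have B1: "\<bar>Nc q r\<bar> \<le> (K * S0^2 + 2 * K) * t" for q r
    proof -
      have "K * s \<le> K * (S0^2 * t)" using st K0 by (rule mult_left_mono)
      then show ?thesis using nab_all[of x y z w q r] hs unfolding Nc_def by (simp add: algebra_simps)
    qed
    have T1: "\<bar>Sop Nc (\<lambda>ys. F ys - G ys) xs'\<bar> \<le> real (length xs') * 3 * (((K * S0^2 + 2 * K) * t) * (D * E * t^(k+1)))"
    proof (rule Sop_bound)
      fix q r show "\<bar>Nc q r\<bar> \<le> (K * S0^2 + 2 * K) * t" by (rule B1)
    next
      fix b p assume "b < length xs'" "p < (3::nat)"
      then show "\<bar>F (xs'[b:=p]) - G (xs'[b:=p])\<bar> \<le> D * E * t^(k+1)"
        unfolding F_def G_def E_def using s' l' set_update_subset_insert[of xs' b p] by (intro IH[OF h]) auto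
    qed
    have T2: "\<bar>Sop (\<lambda>q r. Nc q r - NB q r) G xs'\<bar> \<le> real (length xs') * 3 * (E * (C * s^k))"
    proof (rule Sop_bound)
      fix q r show "\<bar>Nc q r - NB q r\<bar> \<le> E" unfolding Nc_def NB_def E_def by (rule nab_diff)
    next
      fix b p assume "b < length xs'" "p < (3::nat)"
      then show "\<bar>G (xs'[b:=p])\<bar> \<le> C * s^k"
        unfolding G_def using s' l' set_update_subset_insert[of xs' b p] by (intro GB[OF h]) auto
    qed
    have T2': "E * (C * s^k) \<le> E * (C * (S0^(2*k+2) * t^(k+2)))"
      using sk E0 C0 by (intro mult_left_mono) auto
    have "\<bar>FF (br x y z) (Suc k) xs - FF (br x y y) (Suc k) xs\<bar> \<le> \<bar>Sop Nc (\<lambda>ys. F ys - G ys) xs'\<bar> + \<bar>Sop (\<lambda>q r. Nc q r - NB q r) G xs'\<bar>"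
      unfolding e by (simp add: abs_triangle_ineq)
    also have "\<dots> \<le> real (length xs') * 3 * (((K * S0^2 + 2 * K) * t) * (D * E * t^(k+1))) + real (length xs') * 3 * (E * (C * (S0^(2*k+2) * t^(k+2))))"
      using T1 T2 T2' by (smt (verit) mult_left_mono of_nat_0_le_iff)
    also have "\<dots> = D' * E * t^(Suc k + 1)"
      unfolding D'_def using l' by (simp add: algebra_simps)
    finally show "\<bar>FF (br x y z) (Suc k) xs - FF (br x y y) (Suc k) xs\<bar> \<le> D' * \<bar>z - y\<bar> * t^(Suc k + 1)"
      unfolding E_def .
  qed
qed


lemma pow_t: "0 < e \<Longrightarrow> (1 / sqrt e)^n = e powr (- (real n) / 2)"
proof -
  assume e: "0 < e"
  have "1 / sqrt e = e powr (- (1/2))"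
    using e by (simp add: powr_minus_divide powr_half_sqrt)
  then have "(1 / sqrt e)^n = (e powr (- (1/2)))^n" by simp
  also have "\<dots> = e powr (real n * (- (1/2)))" using e by (simp add: powr_power)
  also have "real n * (- (1/2)) = - (real n) / 2" by simp
  finally show ?thesis .
qed

lemma pos_lower:
  fixes X :: "nat \<Rightarrow> real"
  assumes "X \<longlonglongrightarrow> 1" "\<And>n. 0 < X n"
  shows "\<exists>a>0. \<forall>n. a \<le> X n"
proof -
  have "eventually (\<lambda>n. 1/2 < X n) sequentially"
    using order_tendstoD(1)[OF assms(1), of "1/2"] by simp
  then obtain N where N: "\<And>n. n \<ge> N \<Longrightarrow> 1/2 < X n" by (auto simp: eventually_sequentially)
  define a where "a = min (1/2) (Min (X ` {..N}))"
  have "0 < Min (X ` {..N})" using assms(2) by (subst Min_gr_iff) auto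
  then have "0 < a" unfolding a_def by simp
  moreover have "a \<le> X n" for n
  proof (cases "n \<le> N")
    case True
    then have "Min (X ` {..N}) \<le> X n" by (intro Min_le) auto
    then show ?thesis unfolding a_def by simp
  next
    case False
    then have "1/2 < X n" using N by simp
    then show ?thesis unfolding a_def by simp
  qed
  ultimately show ?thesis by blast
qed

lemma upper:
  fixes X :: "nat \<Rightarrow> real"
  assumes "X \<longlonglongrightarrow> L"
  shows "\<exists>b>0. \<forall>n. X n \<le> b"
proof -
  have "Bseq X" using assms by (intro convergent_imp_Bseq convergentI)
  then obtain b where "0 < b" "\<And>n. norm (X n) \<le> b" by (auto simp: Bseq_def)
  then show ?thesis by (metis abs_le_D1 real_norm_def)
qed

lemma mu_br: "mu_const e l1 l2 = br (-2 * sqrt e / (sqrt l1 * sqrt l2)) (-2 * sqrt l1 / (sqrt e * sqrt l2)) (-2 * sqrt l2 / (sqrt e * sqrt l1))"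
  by (simp add: fun_eq_iff mu_const_def su2_const_def metric_diag_def br_def mult.commute)

lemma norm_bound:
  assumes "\<And>xs. length xs = k + 4 \<Longrightarrow> set xs \<subseteq> {..<3} \<Longrightarrow> \<bar>FF c k xs\<bar> \<le> M"
  shows "RmK_norm c k \<le> sqrt (real (card {ws::nat list. length ws = k \<and> set ws \<subseteq> {..<3}}) * 81) * M"
proof -
  define W where "W = {ws::nat list. length ws = k \<and> set ws \<subseteq> {..<3}}"
  have fW: "finite W" unfolding W_def using finite_lists_length_eq[of "{..<3::nat}" k]
    by (simp add: conj_commute)
  have M0: "0 \<le> M" using assms[of "replicate (k+4) 0"] by auto
  have sq: "(RmK c k ws i j m l)\<^sup>2 \<le> M\<^sup>2" if "ws \<in> W" "i < 3" "j < 3" "m < 3" "l < 3" for ws i j m l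
  proof -
    have "RmK c k ws i j m l = FF c k (ws @ [i,j,m,l])" by (simp add: FF_def Flat_app)
    moreover have "\<bar>FF c k (ws @ [i,j,m,l])\<bar> \<le> M" using that unfolding W_def by (intro assms) auto
    ultimately have "\<bar>RmK c k ws i j m l\<bar> \<le> M" by simp
    then have "\<bar>RmK c k ws i j m l\<bar>\<^sup>2 \<le> M\<^sup>2" by (intro power_mono) auto
    then show ?thesis by simp
  qed
  have "(\<Sum>ws\<in>W. \<Sum>i<3. \<Sum>j<3. \<Sum>m<3. \<Sum>l<3. (RmK c k ws i j m l)\<^sup>2) \<le> (\<Sum>ws\<in>W. \<Sum>i<3::nat. \<Sum>j<3::nat. \<Sum>m<3::nat. \<Sum>l<3::nat. M\<^sup>2)"
    by (intro sum_mono sq) auto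
  also have "\<dots> = real (card W) * 81 * M\<^sup>2" by simp
  finally have S: "(\<Sum>ws\<in>W. \<Sum>i<3. \<Sum>j<3. \<Sum>m<3. \<Sum>l<3. (RmK c k ws i j m l)\<^sup>2) \<le> real (card W) * 81 * M\<^sup>2" .
  have "RmK_norm c k \<le> sqrt (real (card W) * 81 * M\<^sup>2)"
    unfolding RmK_norm_def W_def[symmetric] using S by (rule real_sqrt_le_mono)
  also have "\<dots> = sqrt (real (card W) * 81) * M" using M0 by (simp add: real_sqrt_mult)
  finally show ?thesis unfolding W_def .
qed


lemma sqrt_prod_ge: "0 < a \<Longrightarrow> a \<le> p \<Longrightarrow> a \<le> q \<Longrightarrow> a \<le> sqrt p * sqrt q"
proof -
  assume h: "0 < a" "a \<le> p" "a \<le> q"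
  have "sqrt a * sqrt a \<le> sqrt p * sqrt q" using h by (intro mult_mono real_sqrt_le_mono) auto
  then show ?thesis using h by simp
qed

lemma ratio_le: "0 < a \<Longrightarrow> a \<le> q \<Longrightarrow> p \<le> b \<Longrightarrow> 0 < p \<Longrightarrow> sqrt p / sqrt q \<le> sqrt b / sqrt a"
proof -
  assume h: "0 < a" "a \<le> q" "p \<le> b" "0 < p"
  have "sqrt p \<le> sqrt b" "sqrt a \<le> sqrt q" "0 < sqrt a" using h by auto
  then show ?thesis using h by (intro frac_le) auto
qed

theorem proposition4p4:
  fixes eps l1 l2 :: "nat \<Rightarrow> real"
  assumes "almost_Berger eps l1 l2"
    and "reg_index eps l1 l2 \<ge> 2"
  shows "\<forall>k::nat. k \<ge> 1 \<longrightarrow> (\<exists>L>0. \<forall>n.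
           RmK_norm (mu_const (eps n) (l1 n) (l2 n)) k
             \<le> L * (sqrt (eps n) + eps n powr (- (real k + 2) / 2) * \<bar>l1 n - l2 n\<bar>))"
proof (intro allI impI)
  fix k :: nat assume k1: "k \<ge> 1"
  have pos: "\<And>n. eps n > 0" "\<And>n. l1 n > 0" "\<And>n. l2 n > 0" and ce: "eps \<longlonglongrightarrow> 0"
    and c1: "l1 \<longlonglongrightarrow> 1" and c2: "l2 \<longlonglongrightarrow> 1"
    using assms(1) unfolding almost_Berger_def by auto
  obtain E where E0: "E > 0" and Eb: "\<And>n. eps n \<le> E" using upper[OF ce] by auto
  obtain a1 where a1: "a1 > 0" "\<And>n. a1 \<le> l1 n" using pos_lower[OF c1 pos(2)] by auto
  obtain a2 where a2: "a2 > 0" "\<And>n. a2 \<le> l2 n" using pos_lower[OF c2 pos(3)] by auto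
  obtain b1 where b1: "\<And>n. l1 n \<le> b1" using upper[OF c1] by auto
  obtain b2 where b2: "\<And>n. l2 n \<le> b2" using upper[OF c2] by auto
  define a where "a = min a1 a2"
  define b where "b = max b1 b2"
  have a0: "0 < a" unfolding a_def using a1 a2 by simp
  have la: "\<And>n. a \<le> l1 n" "\<And>n. a \<le> l2 n" unfolding a_def using a1 a2 by (auto intro: min.coboundedI1 min.coboundedI2)
  have lb: "\<And>n. l1 n \<le> b" "\<And>n. l2 n \<le> b" unfolding b_def using b1 b2 by (auto intro: max.coboundedI1 max.coboundedI2)
  define K where "K = 2 / a + 2 * sqrt b / sqrt a"
  define S0 where "S0 = sqrt E"
  have b0: "0 < b" using la(1)[of 0] lb(1)[of 0] a0 by linarith
  have K0: "0 \<le> K" unfolding K_def using a0 b0 by simp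
  have S00: "0 \<le> S0" unfolding S0_def using E0 by simp
  obtain C where C0: "0 \<le> C" and GB: "\<And>x y z s t xs. hyp K S0 x y z s t \<Longrightarrow> length xs = k + 4 \<Longrightarrow> set xs \<subseteq> {..<3} \<Longrightarrow> \<bar>FF (br x y y) k xs\<bar> \<le> C * s^k"
    using G_bound[OF K0, of S0 k] by blast
  obtain D where D0: "0 \<le> D" and DB: "\<And>x y z s t xs. hyp K S0 x y z s t \<Longrightarrow> length xs = k + 4 \<Longrightarrow> set xs \<subseteq> {..<3} \<Longrightarrow> \<bar>FF (br x y z) k xs - FF (br x y y) k xs\<bar> \<le> D * \<bar>z - y\<bar> * t^(k+1)"
    using D_bound[OF K0 S00, of k] by blast
  define Wc where "Wc = sqrt (real (card {ws::nat list. length ws = k \<and> set ws \<subseteq> {..<3}}) * 81)"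
  define L0 where "L0 = C * S0^(k-1) + 2 * D / a"
  define L where "L = Wc * L0 + 1"
  have Wc0: "0 \<le> Wc" unfolding Wc_def by simp
  have L00: "0 \<le> L0" unfolding L0_def using C0 D0 S00 a0 by simp
  show "\<exists>L>0. \<forall>n. RmK_norm (mu_const (eps n) (l1 n) (l2 n)) k
             \<le> L * (sqrt (eps n) + eps n powr (- (real k + 2) / 2) * \<bar>l1 n - l2 n\<bar>)"
  proof (intro exI[of _ L] conjI allI)
    show "0 < L" unfolding L_def using Wc0 L00 by (simp add: add_nonneg_pos)
    fix n
    define e where "e = eps n"
    define p where "p = l1 n"
    define q where "q = l2 n"
    define s where "s = sqrt e"
    define t where "t = 1 / s"
    define \<delta> where "\<delta> = \<bar>p - q\<bar>"
    define x where "x = -2 * sqrt e / (sqrt p * sqrt q)"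
    define y where "y = -2 * sqrt p / (sqrt e * sqrt q)"
    define z where "z = -2 * sqrt q / (sqrt e * sqrt p)"
    have e0: "0 < e" unfolding e_def using pos by simp
    have pa: "a \<le> p" "p \<le> b" "0 < p" unfolding p_def using la lb pos by auto
    have qa: "a \<le> q" "q \<le> b" "0 < q" unfolding q_def using la lb pos by auto
    have s0: "0 < s" unfolding s_def using e0 by simp
    have t0: "0 < t" unfolding t_def using s0 by simp
    have st: "s * t = 1" unfolding t_def using s0 by simp
    have sS: "s \<le> S0" unfolding s_def S0_def e_def using Eb by simp
    have pq: "a \<le> sqrt p * sqrt q" using sqrt_prod_ge[OF a0 pa(1) qa(1)] .
    have pq0: "0 < sqrt p * sqrt q" using pa qa by simp
    have c_eq: "mu_const (eps n) (l1 n) (l2 n) = br x y z"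
      unfolding x_def y_def z_def e_def p_def q_def by (rule mu_br)
    have hx: "\<bar>x\<bar> \<le> K * s"
    proof -
      have "\<bar>x\<bar> = 2 * s / (sqrt p * sqrt q)" unfolding x_def s_def using pq0 e0 pa qa by (simp add: abs_divide abs_mult)
      also have "\<dots> \<le> 2 * s / a" using pq s0 a0 by (intro divide_left_mono) auto
      also have "\<dots> = (2 / a) * s" by simp
      also have "\<dots> \<le> K * s" unfolding K_def using s0 a0 b0 by (intro mult_right_mono) auto
      finally show ?thesis .
    qed
    have hy: "\<bar>y\<bar> \<le> K * t"
    proof -
      have "\<bar>y\<bar> = 2 * t * (sqrt p / sqrt q)" unfolding y_def t_def s_def using pa qa e0 by (simp add: abs_divide abs_mult)
      also have "\<dots> \<le> 2 * t * (sqrt b / sqrt a)" using ratio_le[OF a0 qa(1) pa(2) pa(3)] t0 by (intro mult_left_mono) auto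
      also have "\<dots> \<le> K * t" unfolding K_def using t0 a0 by (simp add: algebra_simps)
      finally show ?thesis .
    qed
    have hz: "\<bar>z\<bar> \<le> K * t"
    proof -
      have "\<bar>z\<bar> = 2 * t * (sqrt q / sqrt p)" unfolding z_def t_def s_def using pa qa e0 by (simp add: abs_divide abs_mult)
      also have "\<dots> \<le> 2 * t * (sqrt b / sqrt a)" using ratio_le[OF a0 pa(1) qa(2) qa(3)] t0 by (intro mult_left_mono) auto
      also have "\<dots> \<le> K * t" unfolding K_def using t0 a0 by (simp add: algebra_simps)
      finally show ?thesis .
    qed
    have h: "hyp K S0 x y z s t" unfolding hyp_def using s0 st sS hx hy hz by auto
    have zy: "\<bar>z - y\<bar> \<le> 2 * \<delta> * t / a"
    proof -
      have sp: "sqrt p * sqrt p = p" "sqrt q * sqrt q = q" using pa qa by auto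
      have sp2: "sqrt p * (sqrt p * c) = p * c" "sqrt q * (sqrt q * c) = q * c" for c
        using sp by (simp_all only: mult.assoc[symmetric])
      have zy_eq: "z - y = 2 * (p - q) * t / (sqrt p * sqrt q)"
        unfolding z_def y_def t_def s_def using pa qa e0 sp by (simp add: field_simps sp2)
      have ab: "\<bar>2::real\<bar> = 2" "\<bar>sqrt p\<bar> = sqrt p" "\<bar>sqrt q\<bar> = sqrt q" "\<bar>t\<bar> = t" using t0 pa qa by auto
      have "\<bar>z - y\<bar> = 2 * \<delta> * t / (sqrt p * sqrt q)" unfolding \<delta>_def
        by (simp only: zy_eq abs_divide abs_mult ab)
      also have "\<dots> \<le> 2 * \<delta> * t / a" using pq a0 t0 unfolding \<delta>_def by (intro divide_left_mono) auto
      finally show ?thesis .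
    qed
    define M where "M = C * S0^(k-1) * s + D * (2 / a) * \<delta> * t^(k+2)"
    have comp: "\<bar>FF (br x y z) k xs\<bar> \<le> M" if "length xs = k + 4" "set xs \<subseteq> {..<3}" for xs
    proof -
      have g: "\<bar>FF (br x y y) k xs\<bar> \<le> C * s^k" by (rule GB[OF h that])
      have d: "\<bar>FF (br x y z) k xs - FF (br x y y) k xs\<bar> \<le> D * \<bar>z - y\<bar> * t^(k+1)" by (rule DB[OF h that])
      have "s^k = s * s^(k-1)" using k1 by (metis Suc_diff_le diff_Suc_1 power_Suc)
      also have "\<dots> \<le> s * S0^(k-1)" using s0 sS by (intro mult_left_mono power_mono) auto
      finally have g2: "C * s^k \<le> C * S0^(k-1) * s" using C0 by (metis mult.assoc mult.commute mult_left_mono)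
      have "D * \<bar>z - y\<bar> * t^(k+1) \<le> D * (2 * \<delta> * t / a) * t^(k+1)"
        using zy D0 t0 by (intro mult_right_mono mult_left_mono) auto
      also have "\<dots> = D * (2 / a) * \<delta> * t^(k+2)" by (simp add: algebra_simps)
      finally have d2: "D * \<bar>z - y\<bar> * t^(k+1) \<le> D * (2 / a) * \<delta> * t^(k+2)" .
      show ?thesis unfolding M_def using g d g2 d2 by linarith
    qed
    have "RmK_norm (br x y z) k \<le> Wc * M" unfolding Wc_def by (rule norm_bound) (rule comp)
    also have "M \<le> L0 * (s + t^(k+2) * \<delta>)"
    proof -
      have "C * S0^(k-1) * s \<le> L0 * s" unfolding L0_def using s0 D0 a0 by (intro mult_right_mono) auto
      moreover have "D * (2 / a) * \<delta> * t^(k+2) \<le> L0 * (t^(k+2) * \<delta>)"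
      proof -
        have "0 \<le> C * S0^(k-1)" using C0 S00 by simp
        moreover have "D * (2 / a) = 2 * D / a" by simp
        ultimately have "D * (2 / a) \<le> L0" unfolding L0_def by linarith
        then have "D * (2 / a) * (t^(k+2) * \<delta>) \<le> L0 * (t^(k+2) * \<delta>)"
          using t0 unfolding \<delta>_def by (intro mult_right_mono) auto
        then show ?thesis by (simp add: algebra_simps)
      qed
      ultimately show ?thesis unfolding M_def by (simp add: algebra_simps)
    qed
    then have "Wc * M \<le> Wc * (L0 * (s + t^(k+2) * \<delta>))" using Wc0 by (rule mult_left_mono)
    also have "\<dots> \<le> L * (s + t^(k+2) * \<delta>)"
    proof -
      have "0 \<le> s + t^(k+2) * \<delta>" using s0 t0 unfolding \<delta>_def by simp
      then show ?thesis unfolding L_def by (simp add: algebra_simps)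
    qed
    also have "t^(k+2) = e powr (- (real k + 2) / 2)"
    proof -
      have "t^(k+2) = e powr (- (real (k+2)) / 2)" unfolding t_def s_def by (rule pow_t[OF e0])
      also have "\<dots> = e powr (- (real k + 2) / 2)" by (rule arg_cong[where f="\<lambda>u. e powr u"]) simp
      finally show ?thesis .
    qed
    finally show "RmK_norm (mu_const (eps n) (l1 n) (l2 n)) k \<le> L * (sqrt (eps n) + eps n powr (- (real k + 2) / 2) * \<bar>l1 n - l2 n\<bar>)"
      unfolding c_eq s_def e_def \<delta>_def p_def q_def .
  qed
qed


end
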